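(* Let $\lambda,\mu\in\Lambda$, $g\in\mathcal{D}_{\lambda\mu}$ and $A=\kappa(\lambda,g,\mu)$. Then $W_{\delta(A)}=g^{-1}W_\lambda g\cap W_\mu$.
   Context: Fix integers $r\ge 0$, $d\ge 2$, $n=2r+2$, $D=2d+2$. $W$ is the group of bijections $g:\mathbb{Z}\to\mathbb{Z}$ with $g(i+D)=g(i)+D$, $g(-i)=-g(i)$; it is a Coxeter group with simple reflections $s_0,\dots,s_d$ where (elements determined by values on $1,\dots,d$) $s_0(1)=-1$, $s_0(k)=k$ ($k\ge2$); $s_d(d)=d+2$, $s_d(k)=k$ ($k<d$); $s_i$ ($1\le i\le d-1$) swaps $i,i+1$. $\ell$ is Coxeter length. For $r'\ge 0$ let $\Lambda_{r',d}$ be the set of $\lambda=(\lambda_0,\dots,\lambda_{r'+1})\in\mathbb{N}^{r'+2}$ with sum $d$, and $\Lambda=\Lambda_{r,d}$. For $\lambda\in\Lambda_{r',d}$ put $\lambda_{0,i}=\lambda_0+\dots+\lambda_i$, let $W_\lambda$ be generated by $\{s_0,\dots,s_d\}\setminus\{s_{\lambda_{0,0}},\dots,s_{\lambda_{0,r'}}\}$, and define intervals $R_0^\lambda=[-\lambda_0..\lambda_0]$, $R_i^\lambda=(\lambda_{0,i-1}..\lambda_{0,i}]$ ($1\le i\le r'$), $R^\lambda_{r'+1}=[d+1-\lambda_{r'+1}..d+1+\lambda_{r'+1}]$, extended by $R^\lambda_{-i}=-R^\lambda_i$, $R^\lambda_{i+2r'+2}=R^\lambda_i+D$. Let $\mathcal{D}_\lambda=\{g\in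 W\mid\ell(wg)=\ell(w)+\ell(g)\ \forall w\in W_\lambda\}$ and $\mathcal{D}_{\lambda\mu}=\mathcal{D}_\lambda\cap\mathcal{D}_\mu^{-1}$. For $\lambda,\mu\in\Lambda$, $g\in W$, $\kappa(\lambda,g,\mu)$ is the $\mathbb{Z}\times\mathbb{Z}$ matrix with $(i,j)$-entry $|R_i^\lambda\cap g(R_j^\mu)|$. For such a matrix $A=(a_{ij})$ (which satisfies $a_{-i,-j}=a_{ij}=a_{i+n,j+n}$ with $a_{00},a_{r+1,r+1}$ odd) set $a'_{ii}=(a_{ii}-1)/2$ for $i\in\{0,r+1\}$. Define $\delta(A)$: choose $k_j\ge0$ ($0\le j\le r+1$) with $a_{ij}=0$ unless $|i-j|\le k_j$; $\delta(A)\in\Lambda_{\mathfrak r,d}$ with $\mathfrak r=k_0+\sum_{j=1}^r(2k_j+1)+k_{r+1}$ is the sequence consisting of $a'_{00},a_{10},a_{20},\dots,a_{k_0,0}$, followed, for $j=1,\dots,r$ in turn, by $a_{ij}$ for $i=j-k_j,j-k_j+1,\dots,j+k_j$, followed by $a_{r+1-k_{r+1},r+1},\dots,a_{r,r+1},a'_{r+1,r+1}$. (The subgroup $W_{\delta(A)}$ does not depend on the choice of the $k_j$.) *)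

theory Defs
  imports Main
begin

definition Dper :: "nat \<Rightarrow> int" where
  "Dper d = 2 * int d + 2"

definition Wgrp :: "nat \<Rightarrow> (int \<Rightarrow> int) set" where
  "Wgrp d = {g. bij g \<and> (\<forall>i. g (i + Dper d) = g i + Dper d) \<and> (\<forall>i. g (- i) = - g i)}"

(* Extension of a function given on 1..d to the unique element of W with these values
   (forced: g 0 = 0, g (d+1) = d+1). *)
definition extend :: "nat \<Rightarrow> (int \<Rightarrow> int) \<Rightarrow> int \<Rightarrow> int" where
  "extend d f x = (let D = Dper d; q = x div D; m = x mod D in
     if m = 0 then q * D
     else if m \<le> int d then f m + q * D
     else if m = int d + 1 then m + q * D
     else (q + 1) * D - f (D - m))"

definition sref :: "nat \<Rightarrow> nat \<Rightarrow> int \<Rightarrow> int" where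
  "sref d i = extend d (\<lambda>x.
     if i = 0 then (if x = 1 then -1 else x)
     else if i = d then (if x = int d then int d + 2 else x)
     else (if x = int i then x + 1 else if x = int i + 1 then x - 1 else x))"

definition wordprod :: "nat \<Rightarrow> nat list \<Rightarrow> int \<Rightarrow> int" where
  "wordprod d ws = foldr (\<lambda>i h. sref d i \<circ> h) ws id"

definition clen :: "nat \<Rightarrow> (int \<Rightarrow> int) \<Rightarrow> nat" where
  "clen d g = (LEAST n. \<exists>ws. set ws \<subseteq> {0..d} \<and> length ws = n \<and> wordprod d ws = g)"

(* subgroup generated by {s_j | j \<in> J} (the s_j are involutions, so it is the set of word products) *)
definition parabolic :: "nat \<Rightarrow> nat set \<Rightarrow> (int \<Rightarrow> int) set" where
  "parabolic d J = {wordprod d ws | ws. set ws \<subseteq> J}"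

definition Lam :: "nat \<Rightarrow> nat \<Rightarrow> nat list set" where
  "Lam r' d = {lam. length lam = r' + 2 \<and> sum_list lam = d}"

definition psum :: "nat list \<Rightarrow> nat \<Rightarrow> nat" where
  "psum lam i = sum_list (take (i + 1) lam)"

definition Jset :: "nat \<Rightarrow> nat list \<Rightarrow> nat set" where
  "Jset d lam = {0..d} - {psum lam i | i. i \<le> length lam - 2}"

definition Wpar :: "nat \<Rightarrow> nat list \<Rightarrow> (int \<Rightarrow> int) set" where
  "Wpar d lam = parabolic d (Jset d lam)"

definition Dset :: "nat \<Rightarrow> nat list \<Rightarrow> (int \<Rightarrow> int) set" where
  "Dset d lam = {g \<in> Wgrp d. \<forall>w \<in> Wpar d lam. clen d (w \<circ> g) = clen d w + clen d g}"

definition Dlm :: "nat \<Rightarrow> nat list \<Rightarrow> nat list \<Rightarrow> (int \<Rightarrow> int) set" where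
  "Dlm d lam mu = Dset d lam \<inter> (inv ` Dset d mu)"

definition Rbase :: "nat \<Rightarrow> nat list \<Rightarrow> nat \<Rightarrow> int set" where
  "Rbase d lam i = (let rr = length lam - 2 in
     if i = 0 then {- int (lam ! 0) .. int (lam ! 0)}
     else if i \<le> rr then {int (psum lam (i - 1)) <.. int (psum lam i)}
     else {int d + 1 - int (lam ! (rr + 1)) .. int d + 1 + int (lam ! (rr + 1))})"

(* R_i^lambda for all i \<in> Z, via R_{-i} = -R_i and R_{i+2r'+2} = R_i + D *)
definition Rset :: "nat \<Rightarrow> nat list \<Rightarrow> int \<Rightarrow> int set" where
  "Rset d lam i = (let rr = length lam - 2; n = 2 * int rr + 2; D = Dper d;
       q = i div n; m = i mod n in
     if m \<le> int rr + 1 then (\<lambda>x. x + q * D) ` Rbase d lam (nat m)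
     else (\<lambda>x. (q + 1) * D - x) ` Rbase d lam (nat (n - m)))"

definition kappa :: "nat \<Rightarrow> nat list \<Rightarrow> (int \<Rightarrow> int) \<Rightarrow> nat list \<Rightarrow> int \<Rightarrow> int \<Rightarrow> nat" where
  "kappa d lam g mu i j = card (Rset d lam i \<inter> g ` Rset d mu j)"

definition kvalid :: "nat \<Rightarrow> (int \<Rightarrow> int \<Rightarrow> nat) \<Rightarrow> (nat \<Rightarrow> nat) \<Rightarrow> bool" where
  "kvalid r A k = (\<forall>j \<le> r + 1. \<forall>i. A i (int j) \<noteq> 0 \<longrightarrow> \<bar>i - int j\<bar> \<le> int (k j))"

definition delta :: "nat \<Rightarrow> (int \<Rightarrow> int \<Rightarrow> nat) \<Rightarrow> (nat \<Rightarrow> nat) \<Rightarrow> nat list" where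
  "delta r A k =
     [(A 0 0 - 1) div 2]
     @ map (\<lambda>i. A (int i) 0) [1..<k 0 + 1]
     @ concat (map (\<lambda>j. map (\<lambda>i. A i (int j)) [int j - int (k j) .. int j + int (k j)]) [1..<r + 1])
     @ map (\<lambda>i. A i (int r + 1)) [int r + 1 - int (k (r + 1)) .. int r]
     @ [(A (int r + 1) (int r + 1) - 1) div 2]"

end

theory Submission
  imports Defs
begin


locale dctx =
  fixes d :: nat
  assumes d2: "2 \<le> d"
begin

abbreviation DD :: int where "DD \<equiv> Dper d"

lemma DD_eq: "DD = 2 * int d + 2" by (simp add: Dper_def)
lemma DD_pos: "DD > 0" by (simp add: Dper_def)

definition eqm :: "int \<Rightarrow> int \<Rightarrow> bool" where
  "eqm x y \<longleftrightarrow> x mod DD = y mod DD"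

lemma eqm_iff: "eqm x y \<longleftrightarrow> (\<exists>k. y = x + k * DD)"
proof
  assume "eqm x y"
  hence "x mod DD = y mod DD" by (simp add: eqm_def)
  moreover have "x = x div DD * DD + x mod DD" "y = y div DD * DD + y mod DD" by simp_all
  ultimately have "y - x = (y div DD - x div DD) * DD"
    by (metis (no_types, lifting) add_diff_cancel_right left_diff_distrib')
  hence "y = x + (y div DD - x div DD) * DD" by simp
  thus "\<exists>k. y = x + k * DD" by blast
next
  assume "\<exists>k. y = x + k * DD"
  then obtain k where "y = x + k * DD" by blast
  thus "eqm x y" by (simp add: eqm_def)
qed

lemma eqm_refl[simp]: "eqm x x" by (simp add: eqm_def)
lemma eqm_sym: "eqm x y \<Longrightarrow> eqm y x" by (simp add: eqm_def)
lemma eqm_trans: "eqm x y \<Longrightarrow> eqm y z \<Longrightarrow> eqm x z" by (simp add: eqm_def)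
lemma eqm_add: "eqm x y \<Longrightarrow> eqm (x + c) (y + c)"
  by (auto simp: eqm_iff algebra_simps)
lemma eqm_add_iff: "eqm (x + c) (y + c) \<longleftrightarrow> eqm x y"
  by (auto simp: eqm_iff algebra_simps)
lemma eqm_neg: "eqm x y \<Longrightarrow> eqm (- x) (- y)"
  by (auto simp: eqm_iff) (metis minus_add_distrib mult_minus_left)
lemma eqm_neg_iff: "eqm (- x) (- y) \<longleftrightarrow> eqm x y"
  using eqm_neg by fastforce
lemma eqm_shift: "eqm (x + k * DD) y \<longleftrightarrow> eqm x y"
  by (simp add: eqm_def)
lemma eqm_shift2: "eqm x (y + k * DD) \<longleftrightarrow> eqm x y"
  by (simp add: eqm_def)
lemma eqm_D: "eqm (x + DD) y \<longleftrightarrow> eqm x y"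
  using eqm_shift[of x 1] by simp
lemma eqm_small: "0 \<le> v \<Longrightarrow> v < DD \<Longrightarrow> eqm x v \<longleftrightarrow> x mod DD = v"
  by (simp add: eqm_def)

definition Wg :: "(int \<Rightarrow> int) set" where "Wg = Wgrp d"

lemma W_bij: "w \<in> Wg \<Longrightarrow> bij w" by (simp add: Wg_def Wgrp_def)
lemma W_inj: "w \<in> Wg \<Longrightarrow> inj w" using W_bij bij_is_inj by blast
lemma W_D: "w \<in> Wg \<Longrightarrow> w (x + DD) = w x + DD" by (simp add: Wg_def Wgrp_def)
lemma W_neg: "w \<in> Wg \<Longrightarrow> w (- x) = - w x" by (simp add: Wg_def Wgrp_def)

lemma W_per: assumes "w \<in> Wg" shows "w (x + k * DD) = w x + k * DD"
proof (induction k rule: int_induct[where k=0])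
  case base then show ?case by simp
next
  case (step1 i) 
  have "w (x + (i+1) * DD) = w (x + i * DD + DD)" by (simp add: algebra_simps)
  also have "\<dots> = w (x + i*DD) + DD" using W_D[OF assms] by simp
  finally show ?case using step1 by (simp add: algebra_simps)
next
  case (step2 i)
  have "w (x + i * DD) = w (x + (i - 1) * DD + DD)" by (simp add: algebra_simps)
  also have "\<dots> = w (x + (i - 1)*DD) + DD" using W_D[OF assms] by simp
  finally show ?case using step2 by (simp add: algebra_simps)
qed

lemma W_0: "w \<in> Wg \<Longrightarrow> w 0 = 0"
  using W_neg[of w 0] by simp

lemma W_d1: assumes "w \<in> Wg" shows "w (int d + 1) = int d + 1"
proof -
  have "w (int d + 1) = w (- (int d + 1) + DD)" by (simp add: DD_eq)
  also have "\<dots> = w (- (int d + 1)) + DD" using W_D[OF assms] .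
  also have "\<dots> = - w (int d + 1) + DD" using W_neg[OF assms, of "int d + 1"] by simp
  finally show ?thesis by (simp add: DD_eq)
qed

lemma W_eqm: assumes "w \<in> Wg" shows "eqm (w x) (w y) \<longleftrightarrow> eqm x y"
proof
  assume "eqm x y" then obtain k where "y = x + k * DD" by (auto simp: eqm_iff)
  thus "eqm (w x) (w y)" using W_per[OF assms] by (auto simp: eqm_iff)
next
  assume "eqm (w x) (w y)" then obtain k where "w y = w x + k * DD" by (auto simp: eqm_iff)
  hence "w y = w (x + k * DD)" using W_per[OF assms] by simp
  hence "y = x + k * DD" using W_inj[OF assms] by (simp add: inj_eq)
  thus "eqm x y" by (auto simp: eqm_iff)
qed

lemma W_eqm0: assumes "w \<in> Wg" shows "eqm (w x) 0 \<longleftrightarrow> eqm x 0"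
  using W_eqm[OF assms, of x 0] W_0[OF assms] by simp
lemma W_eqmd1: assumes "w \<in> Wg" shows "eqm (w x) (int d + 1) \<longleftrightarrow> eqm x (int d + 1)"
  using W_eqm[OF assms, of x "int d + 1"] W_d1[OF assms] by simp
lemma W_eqmneg: assumes "w \<in> Wg" shows "eqm (w x) (- w y) \<longleftrightarrow> eqm x (- y)"
  using W_eqm[OF assms, of x "- y"] W_neg[OF assms] by simp

lemma W_id: "id \<in> Wg" by (simp add: Wg_def Wgrp_def)

lemma W_comp: "v \<in> Wg \<Longrightarrow> w \<in> Wg \<Longrightarrow> v \<circ> w \<in> Wg"
  by (simp add: Wg_def Wgrp_def bij_comp)

lemma W_inv: assumes "w \<in> Wg" shows "inv w \<in> Wg"
proof -
  have b: "bij w" using W_bij[OF assms] .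
  have "inv w (x + DD) = inv w x + DD" for x
  proof -
    have "w (inv w x + DD) = x + DD" using W_D[OF assms] b by (simp add: bij_is_surj surj_f_inv_f)
    thus ?thesis using b by (metis bij_inv_eq_iff)
  qed
  moreover have "inv w (- x) = - inv w x" for x
  proof -
    have "w (- inv w x) = - x" using W_neg[OF assms] b by (simp add: bij_is_surj surj_f_inv_f)
    thus ?thesis using b by (metis bij_inv_eq_iff)
  qed
  ultimately show ?thesis using b bij_imp_bij_inv by (auto simp: Wg_def Wgrp_def)
qed

lemma W_inv_left: "w \<in> Wg \<Longrightarrow> inv w (w x) = x"
  using W_inj inv_f_f by metis
lemma W_inv_right: "w \<in> Wg \<Longrightarrow> w (inv w x) = x"
  using W_bij bij_inv_eq_iff by metis

end


context dctx begin

definition rf :: "int \<Rightarrow> int \<Rightarrow> int \<Rightarrow> int" where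
  "rf a b x = (if eqm x a then x + (b - a) else if eqm x b then x - (b - a)
     else if eqm x (- a) then x - (b - a) else if eqm x (- b) then x + (b - a) else x)"

definition valid :: "int \<Rightarrow> int \<Rightarrow> bool" where
  "valid a b \<longleftrightarrow> \<not> eqm a 0 \<and> \<not> eqm a (int d + 1) \<and> \<not> eqm b 0 \<and> \<not> eqm b (int d + 1) \<and> \<not> eqm a b"

lemma eqm_self_neg: assumes "eqm a (- a)" shows "eqm a 0 \<or> eqm a (int d + 1)"
proof -
  let ?m = "a mod DD"
  have "(- a) mod DD = (if ?m = 0 then 0 else DD - ?m)" by (rule zmod_zminus1_eq_if)
  with assms have h: "?m = (if ?m = 0 then 0 else DD - ?m)" by (simp add: eqm_def)
  show ?thesis
  proof (cases "?m = 0")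
    case True thus ?thesis by (simp add: eqm_def)
  next
    case False
    with h have "?m = int d + 1" by (simp add: DD_eq)
    moreover have "(int d + 1) mod DD = int d + 1" by (simp add: DD_eq)
    ultimately show ?thesis by (simp add: eqm_def)
  qed
qed

lemma valid_nn: "valid a b \<Longrightarrow> \<not> eqm a (- a) \<and> \<not> eqm b (- b)"
  using eqm_self_neg unfolding valid_def by blast

lemma rf_shiftx: "rf a b (x + k * DD) = rf a b x + k * DD"
  unfolding rf_def by (simp add: eqm_shift)

lemma eqm_shift3: "eqm x (y - k * DD) \<longleftrightarrow> eqm x y"
  using eqm_shift2[of x y "- k"] by simp

lemma rf_shift: "rf (a + k * DD) (b + k * DD) = rf a b"
proof
  fix x
  show "rf (a + k * DD) (b + k * DD) x = rf a b x"
    unfolding rf_def by (simp add: eqm_shift2 eqm_shift3)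
qed

lemma eqm_contra:
  assumes "valid a b"
  shows "eqm x a \<Longrightarrow> eqm x b \<Longrightarrow> False" "eqm x a \<Longrightarrow> eqm x (- a) \<Longrightarrow> False"
    "eqm x b \<Longrightarrow> eqm x (- b) \<Longrightarrow> False" "eqm x (- a) \<Longrightarrow> eqm x (- b) \<Longrightarrow> False"
proof -
  have v: "\<not> eqm a b" "\<not> eqm a (- a)" "\<not> eqm b (- b)" using assms valid_nn unfolding valid_def by auto
  show "eqm x a \<Longrightarrow> eqm x b \<Longrightarrow> False" using v eqm_sym eqm_trans by blast
  show "eqm x a \<Longrightarrow> eqm x (- a) \<Longrightarrow> False" using v eqm_sym eqm_trans by blast
  show "eqm x b \<Longrightarrow> eqm x (- b) \<Longrightarrow> False" using v eqm_sym eqm_trans by blast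
  show "eqm x (- a) \<Longrightarrow> eqm x (- b) \<Longrightarrow> False" using v eqm_sym eqm_trans eqm_neg_iff by metis
qed

lemma rf_swap_neg: assumes "valid a b" shows "rf (- b) (- a) = rf a b"
proof
  fix x
  note c = eqm_contra[OF assms, of x]
  show "rf (- b) (- a) x = rf a b x"
    apply (cases "eqm x a"; cases "eqm x b"; cases "eqm x (- a)"; cases "eqm x (- b)")
    apply (simp_all add: rf_def)
    using c by blast+
qed

lemma eqm_addc: "eqm x y \<Longrightarrow> x' = x + c \<Longrightarrow> y' = y + c \<Longrightarrow> eqm x' y'"
  using eqm_add by blast

lemma eqm_move1: "eqm x a \<Longrightarrow> eqm (x + (b - a)) b" using eqm_add[of x a "b - a"] by simp
lemma eqm_move2: "eqm x b \<Longrightarrow> eqm (x - (b - a)) a" using eqm_add[of x b "a - b"] by (simp add: algebra_simps)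
lemma eqm_move3: "eqm x (- a) \<Longrightarrow> eqm (x - (b - a)) (- b)" using eqm_add[of x "- a" "a - b"] by (simp add: algebra_simps)
lemma eqm_move4: "eqm x (- b) \<Longrightarrow> eqm (x + (b - a)) (- a)" using eqm_add[of x "- b" "b - a"] by simp
lemmas eqm_move = eqm_move1 eqm_move2 eqm_move3 eqm_move4
lemma eqm_move_back1: "eqm (x + (b - a)) b \<Longrightarrow> eqm x a" using eqm_add[of "x + (b - a)" b "a - b"] by simp
lemma eqm_move_back2: "eqm (x - (b - a)) a \<Longrightarrow> eqm x b" using eqm_add[of "x - (b - a)" a "b - a"] by simp
lemma eqm_move_back3: "eqm (x - (b - a)) (- b) \<Longrightarrow> eqm x (- a)" using eqm_add[of "x - (b - a)" "- b" "b - a"] by simp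
lemma eqm_move_back4: "eqm (x + (b - a)) (- a) \<Longrightarrow> eqm x (- b)" using eqm_add[of "x + (b - a)" "- a" "a - b"] by simp
lemmas eqm_move_back = eqm_move_back1 eqm_move_back2 eqm_move_back3 eqm_move_back4

lemma rf_rf: assumes "valid a b" shows "rf a b (rf a b x) = x"
proof -
  note c = eqm_contra[OF assms]
  consider "eqm x a" | "\<not> eqm x a" "eqm x b" | "\<not> eqm x a" "\<not> eqm x b" "eqm x (- a)"
    | "\<not> eqm x a" "\<not> eqm x b" "\<not> eqm x (- a)" "eqm x (- b)"
    | "\<not> eqm x a" "\<not> eqm x b" "\<not> eqm x (- a)" "\<not> eqm x (- b)" by blast
  thus ?thesis
  proof cases
    case 1
    hence e: "eqm (x + (b - a)) b" by (rule eqm_move)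
    hence "\<not> eqm (x + (b - a)) a" using c by blast
    thus ?thesis using 1 e by (simp add: rf_def)
  next
    case 2
    hence e: "eqm (x - (b - a)) a" by (intro eqm_move)
    thus ?thesis using 2 by (simp add: rf_def)
  next
    case 3
    hence e: "eqm (x - (b - a)) (- b)" by (intro eqm_move)
    have "\<not> eqm (x - (b - a)) a" "\<not> eqm (x - (b - a)) b" "\<not> eqm (x - (b - a)) (- a)"
      using 3 e c eqm_move_back by blast+
    thus ?thesis using 3 e by (simp add: rf_def)
  next
    case 4
    hence e: "eqm (x + (b - a)) (- a)" by (intro eqm_move)
    have "\<not> eqm (x + (b - a)) a" "\<not> eqm (x + (b - a)) b"
      using 4 e c eqm_move_back by blast+
    thus ?thesis using 4 e by (simp add: rf_def)
  next
    case 5 thus ?thesis by (simp add: rf_def)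
  qed
qed

lemma rf_odd: assumes "valid a b" shows "rf a b (- x) = - rf a b x"
proof -
  note c = eqm_contra[OF assms]
  have e1: "eqm (- x) a \<longleftrightarrow> eqm x (- a)" "eqm (- x) b \<longleftrightarrow> eqm x (- b)"
    "eqm (- x) (- a) \<longleftrightarrow> eqm x a" "eqm (- x) (- b) \<longleftrightarrow> eqm x b"
    using eqm_neg_iff by (metis minus_minus)+
  show ?thesis
    unfolding rf_def e1
    apply (cases "eqm x a"; cases "eqm x b"; cases "eqm x (- a)"; cases "eqm x (- b)")
    apply (simp_all)
    using c[of x] by blast+
qed

lemma rf_W: assumes "valid a b" shows "rf a b \<in> Wg"
proof -
  have "bij (rf a b)"
    by (rule o_bij[of "rf a b"]) (auto simp: rf_rf[OF assms])
  moreover have "rf a b (x + DD) = rf a b x + DD" for x using rf_shiftx[of a b x 1] by simp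
  ultimately show ?thesis using rf_odd[OF assms] by (simp add: Wg_def Wgrp_def)
qed

lemma rf_conj: assumes w: "w \<in> Wg" shows "w (rf a b x) = rf (w a) (w b) (w x)"
proof -
  have ea: "eqm (w x) (w a) \<longleftrightarrow> eqm x a" "eqm (w x) (w b) \<longleftrightarrow> eqm x b"
    "eqm (w x) (- w a) \<longleftrightarrow> eqm x (- a)" "eqm (w x) (- w b) \<longleftrightarrow> eqm x (- b)"
    using W_eqm[OF w] W_eqmneg[OF w] by blast+
  have v1: "w (x + (b - a)) = w x + (w b - w a)" if hh: "eqm x a" for a b
  proof -
    obtain k where "a = x + k * DD" using hh unfolding eqm_iff by blast
    hence x: "x = a + (- k) * DD" by simp
    have "x + (b - a) = b + (- k) * DD" by (subst x, simp)
    hence "w (x + (b - a)) = w (b + (- k) * DD)" by (rule arg_cong)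
    also have "\<dots> = w b + (- k) * DD" by (rule W_per[OF w])
    moreover have "w x = w a + (- k) * DD" by (subst x, rule W_per[OF w])
    ultimately show ?thesis by simp
  qed
  have v2: "w (x - (b - a)) = w x - (w b - w a)" if hh: "eqm x (- a)" for a b
  proof -
    obtain k where "- a = x + k * DD" using hh unfolding eqm_iff by blast
    hence x: "x = - a + (- k) * DD" by simp
    have "x - (b - a) = - b + (- k) * DD" by (subst x, simp)
    hence "w (x - (b - a)) = w (- b + (- k) * DD)" by (rule arg_cong)
    also have "\<dots> = - w b + (- k) * DD" using W_per[OF w, of "- b" "- k"] W_neg[OF w, of b] by simp
    moreover have "w x = - w a + (- k) * DD" using W_per[OF w, of "- a" "- k"] W_neg[OF w, of a] by (subst x, simp)
    ultimately show ?thesis by simp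
  qed
  have v3: "w (x - (b - a)) = w x - (w b - w a)" if "eqm x b"
  proof -
    have "x - (b - a) = x + (a - b)" by simp
    hence "w (x - (b - a)) = w (x + (a - b))" by (rule arg_cong)
    also have "\<dots> = w x + (w a - w b)" by (rule v1[OF that])
    finally show ?thesis by linarith
  qed
  have v4: "w (x + (b - a)) = w x + (w b - w a)" if "eqm x (- b)"
  proof -
    have "x + (b - a) = x - (a - b)" by simp
    hence "w (x + (b - a)) = w (x - (a - b))" by (rule arg_cong)
    also have "\<dots> = w x - (w a - w b)" by (rule v2[OF that])
    finally show ?thesis by linarith
  qed
  consider "eqm x a" | "\<not> eqm x a" "eqm x b" | "\<not> eqm x a" "\<not> eqm x b" "eqm x (- a)"
    | "\<not> eqm x a" "\<not> eqm x b" "\<not> eqm x (- a)" "eqm x (- b)"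
    | "\<not> eqm x a" "\<not> eqm x b" "\<not> eqm x (- a)" "\<not> eqm x (- b)" by blast
  thus ?thesis
  proof cases
    case 1 
    have "rf a b x = x + (b - a)" "rf (w a) (w b) (w x) = w x + (w b - w a)"
      using 1 ea unfolding rf_def by simp_all
    thus ?thesis using v1 1 by simp
  next
    case 2
    have "rf a b x = x - (b - a)" "rf (w a) (w b) (w x) = w x - (w b - w a)"
      using 2 ea unfolding rf_def by simp_all
    thus ?thesis using v3 2 by simp
  next
    case 3
    have "rf a b x = x - (b - a)" "rf (w a) (w b) (w x) = w x - (w b - w a)"
      using 3 ea unfolding rf_def by simp_all
    thus ?thesis using v2 3 by simp
  next
    case 4
    have "rf a b x = x + (b - a)" "rf (w a) (w b) (w x) = w x + (w b - w a)"
      using 4 ea unfolding rf_def by simp_all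
    thus ?thesis using v4 4 by simp
  next
    case 5
    have "rf a b x = x" "rf (w a) (w b) (w x) = w x"
      using 5 ea unfolding rf_def by simp_all
    thus ?thesis by simp
  qed
qed

lemma valid_W: assumes w: "w \<in> Wg" shows "valid (w a) (w b) \<longleftrightarrow> valid a b"
  unfolding valid_def using W_eqm0[OF w] W_eqmd1[OF w] W_eqm[OF w] by simp

lemma pair_class:
  assumes "valid a b" "valid a' b'" "a < b" "a' < b'" "rf a b = rf a' b'"
  shows "(\<exists>k. a' = a + k * DD \<and> b' = b + k * DD) \<or> (\<exists>k. a' = - b + k * DD \<and> b' = - a + k * DD)"
proof -
  have "rf a' b' a' = b'" by (simp add: rf_def)
  hence h: "rf a b a' = b'" using assms(5) by simp
  consider "eqm a' a" | "\<not> eqm a' a" "eqm a' b" | "\<not> eqm a' a" "\<not> eqm a' b" "eqm a' (- a)"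
    | "\<not> eqm a' a" "\<not> eqm a' b" "\<not> eqm a' (- a)" "eqm a' (- b)"
    | "\<not> eqm a' a" "\<not> eqm a' b" "\<not> eqm a' (- a)" "\<not> eqm a' (- b)" by blast
  thus ?thesis
  proof cases
    case 1
    then obtain k where "a' = a + k * DD" using eqm_iff eqm_sym by blast
    moreover have "b' = a' + (b - a)" using h 1 by (simp add: rf_def)
    ultimately show ?thesis by auto
  next
    case 2 thus ?thesis using h assms(3,4) by (simp add: rf_def)
  next
    case 3 thus ?thesis using h assms(3,4) by (simp add: rf_def)
  next
    case 4
    then obtain k where "a' = - b + k * DD" using eqm_iff eqm_sym by blast
    moreover have "b' = a' + (b - a)" using h 4 by (simp add: rf_def)
    ultimately show ?thesis by auto
  next
    case 5 thus ?thesis using h assms(4) by (simp add: rf_def)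
  qed
qed

definition Inv :: "(int \<Rightarrow> int) \<Rightarrow> (int \<Rightarrow> int) set" where
  "Inv w = {t. \<exists>a b. t = rf a b \<and> a < b \<and> valid a b \<and> w b < w a}"

definition NN :: "(int \<Rightarrow> int) \<Rightarrow> nat" where "NN w = card (Inv w)"

lemma inv_welldef:
  assumes w: "w \<in> Wg" and "valid a b" "valid a' b'" "a < b" "a' < b'" "rf a b = rf a' b'"
  shows "w b < w a \<longleftrightarrow> w b' < w a'"
  using pair_class[OF assms(2-6)]
proof
  assume "\<exists>k. a' = a + k * DD \<and> b' = b + k * DD"
  thus ?thesis using W_per[OF w] by auto
next
  assume "\<exists>k. a' = - b + k * DD \<and> b' = - a + k * DD"
  then obtain k where k: "a' = - b + k * DD" "b' = - a + k * DD" by blast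
  have "w a' = w (- b + k * DD)" "w b' = w (- a + k * DD)" using k by simp_all
  moreover have "w (- b + k * DD) = w (- b) + k * DD" "w (- a + k * DD) = w (- a) + k * DD"
    by (rule W_per[OF w])+
  moreover have "w (- b) = - w b" "w (- a) = - w a" by (rule W_neg[OF w])+
  ultimately have "w a' = - w b + k * DD" "w b' = - w a + k * DD" by linarith+
  thus ?thesis by linarith
qed

lemma Inv_mem: assumes w: "w \<in> Wg" and "valid a b" "a < b"
  shows "rf a b \<in> Inv w \<longleftrightarrow> w b < w a"
proof
  assume "rf a b \<in> Inv w"
  then obtain a' b' where "rf a b = rf a' b'" "a' < b'" "valid a' b'" "w b' < w a'"
    unfolding Inv_def by blast
  thus "w b < w a" using inv_welldef[OF w assms(2) _ assms(3)] by blast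
qed (use assms in \<open>auto simp: Inv_def\<close>)

lemma W_bound: assumes w: "w \<in> Wg" shows "\<exists>M. \<forall>x. \<bar>w x - x\<bar> \<le> M"
proof -
  define M where "M = Max ((\<lambda>x. \<bar>w x - x\<bar>) ` {0..<DD})"
  have "\<bar>w x - x\<bar> \<le> M" for x
  proof -
    have x: "x = x mod DD + (x div DD) * DD" by simp
    have "w x = w (x mod DD + (x div DD) * DD)" by simp
    also have "\<dots> = w (x mod DD) + (x div DD) * DD" by (rule W_per[OF w])
    finally have "w x - x = w (x mod DD) - x mod DD" using x by linarith
    moreover have "x mod DD \<in> {0..<DD}" using DD_pos by simp
    moreover have "\<bar>w (x mod DD) - x mod DD\<bar> \<le> M" unfolding M_def
      by (rule Max_ge) (use \<open>x mod DD \<in> {0..<DD}\<close> in auto)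
    ultimately show ?thesis by simp
  qed
  thus ?thesis by blast
qed

lemma Inv_finite: assumes w: "w \<in> Wg" shows "finite (Inv w)"
proof -
  obtain M where M: "\<And>x. \<bar>w x - x\<bar> \<le> M" using W_bound[OF w] by blast
  have "Inv w \<subseteq> (\<lambda>(a, b). rf a b) ` ({0..<DD} \<times> {0..DD + 2 * M})"
  proof
    fix t assume "t \<in> Inv w"
    then obtain a b where t: "t = rf a b" "a < b" "w b < w a" unfolding Inv_def by blast
    define k where "k = a div DD"
    define a0 where "a0 = a mod DD"
    have a: "a = a0 + k * DD" unfolding a0_def k_def by simp
    have "rf a b = rf a0 (b - k * DD)" using rf_shift[of a0 k "b - k * DD"] a by simp
    moreover have "a0 \<in> {0..<DD}" unfolding a0_def using DD_pos by simp
    moreover have "b - a \<le> 2 * M" using M[of a] M[of b] t by linarith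
    hence "b - k * DD \<in> {0..DD + 2 * M}" using a \<open>a0 \<in> {0..<DD}\<close> t(2) by auto
    ultimately show "t \<in> (\<lambda>(a, b). rf a b) ` ({0..<DD} \<times> {0..DD + 2 * M})" using t(1)
      by (intro image_eqI[where x="(a0, b - k * DD)"]) auto
  qed
  thus ?thesis by (rule finite_subset) auto
qed

end


context dctx begin

definition pa :: "nat \<Rightarrow> int" where "pa i = (if i = 0 then -1 else int i)"
definition pb :: "nat \<Rightarrow> int" where "pb i = (if i = 0 then 1 else if i = d then int d + 2 else int i + 1)"

lemma ext_red: "extend d f x = extend d f (x mod DD) + (x div DD) * DD"
proof -
  have m: "(x mod DD) mod DD = x mod DD" "(x mod DD) div DD = 0" using DD_pos by simp_all
  show ?thesis unfolding extend_def Let_def m by (simp add: algebra_simps)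
qed

lemma ext_small: "0 \<le> m \<Longrightarrow> m < DD \<Longrightarrow>
  extend d f m = (if m = 0 then 0 else if m \<le> int d then f m else if m = int d + 1 then m else DD - f (DD - m))"
  unfolding extend_def Let_def by (simp add: div_pos_pos_trivial mod_pos_pos_trivial)

lemma rf_red: "rf a b x = rf a b (x mod DD) + (x div DD) * DD"
  using rf_shiftx[of a b "x mod DD" "x div DD"] by simp

lemma eqm_small2: "0 \<le> m \<Longrightarrow> m < DD \<Longrightarrow> eqm m v \<longleftrightarrow> m = v mod DD"
  by (simp add: eqm_def mod_pos_pos_trivial)

lemma modc1: "0 \<le> v \<Longrightarrow> v < DD \<Longrightarrow> v mod DD = v" by (simp add: mod_pos_pos_trivial)
lemma modc2: "0 < v \<Longrightarrow> v < DD \<Longrightarrow> (- v) mod DD = DD - v"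
  by (simp add: zmod_zminus1_eq_if mod_pos_pos_trivial)

lemma sref_rf_pt0:
  assumes "i = 0" "0 \<le> m" "m < DD"
  shows "sref d i m = rf (pa i) (pb i) m"
proof -
  have D: "DD = 2 * int d + 2" by (rule DD_eq)
  have d2': "int d \<ge> 2" using d2 by simp
  have e: "eqm m v \<longleftrightarrow> m = v mod DD" for v using eqm_small2[OF assms(2,3)] .
  have c: "(-1) mod DD = DD - 1" "1 mod DD = 1" "(- (-1)) mod DD = 1" "(-1::int) mod DD = DD - 1"
    using modc2[of 1] modc1[of 1] D d2' by simp_all
  have "sref d i m = (if m = 0 then 0 else if m \<le> int d then (if m = 1 then -1 else m)
      else if m = int d + 1 then m else DD - (if DD - m = 1 then -1 else DD - m))"
    unfolding sref_def using assms(1) ext_small[OF assms(2,3)] by simp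
  moreover have "rf (pa i) (pb i) m = (if m = DD - 1 then m + 2 else if m = 1 then m - 2 else m)"
    unfolding rf_def pa_def pb_def e using assms(1) c by simp
  moreover consider "m = 0" | "m = 1" | "2 \<le> m" "m \<le> int d" | "m = int d + 1"
    | "int d + 2 \<le> m" "m \<le> DD - 2" | "m = DD - 1" using assms(2,3) D by linarith
  ultimately show ?thesis using D d2' by cases simp_all
qed

lemma sref_rf_ptd:
  assumes "i = d" "0 \<le> m" "m < DD"
  shows "sref d i m = rf (pa i) (pb i) m"
proof -
  have D: "DD = 2 * int d + 2" by (rule DD_eq)
  have d2': "int d \<ge> 2" using d2 by simp
  have e: "eqm m v \<longleftrightarrow> m = v mod DD" for v using eqm_small2[OF assms(2,3)] .
  have c: "int d mod DD = int d" "(int d + 2) mod DD = int d + 2" "(- int d) mod DD = int d + 2"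
     "(- (int d + 2)) mod DD = int d"
    using modc2[of "int d"] modc1[of "int d"] modc1[of "int d + 2"] modc2[of "int d + 2"] D d2' by simp_all
  have "sref d i m = (if m = 0 then 0 else if m \<le> int d then (if m = int d then int d + 2 else m)
      else if m = int d + 1 then m else DD - (if DD - m = int d then int d + 2 else DD - m))"
    unfolding sref_def using assms(1) d2 ext_small[OF assms(2,3)] by simp
  moreover have "rf (pa i) (pb i) m = (if m = int d then m + 2 else if m = int d + 2 then m - 2 else m)"
    unfolding rf_def pa_def pb_def e using assms(1) c d2 by simp
  moreover consider "m = 0" | "1 \<le> m" "m < int d" | "m = int d" | "m = int d + 1" | "m = int d + 2"
    | "int d + 3 \<le> m" "m < DD" using assms(2,3) D by linarith
  ultimately show ?thesis using D d2' by cases simp_all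
qed

lemma sref_rf_pti:
  assumes "0 < i" "i < d" "0 \<le> m" "m < DD"
  shows "sref d i m = rf (pa i) (pb i) m"
proof -
  have D: "DD = 2 * int d + 2" by (rule DD_eq)
  have e: "eqm m v \<longleftrightarrow> m = v mod DD" for v using eqm_small2[OF assms(3,4)] .
  have c: "int i mod DD = int i" "(int i + 1) mod DD = int i + 1" "(- int i) mod DD = DD - int i"
     "(- (int i + 1)) mod DD = DD - int i - 1"
  proof -
    show "int i mod DD = int i" using assms D by (intro modc1) linarith+
    show "(int i + 1) mod DD = int i + 1" using assms D by (intro modc1) linarith+
    show "(- int i) mod DD = DD - int i" using assms D by (intro modc2) linarith+
    have "(- (int i + 1)) mod DD = DD - (int i + 1)" using assms D by (intro modc2) linarith+
    thus "(- (int i + 1)) mod DD = DD - int i - 1" by simp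
  qed
  have "sref d i m = (if m = 0 then 0 else if m \<le> int d then (if m = int i then m + 1 else if m = int i + 1 then m - 1 else m)
      else if m = int d + 1 then m else DD - (if DD - m = int i then DD - m + 1 else if DD - m = int i + 1 then DD - m - 1 else DD - m))"
    unfolding sref_def using assms(1,2) ext_small[OF assms(3,4)] by simp
  moreover have "rf (pa i) (pb i) m = (if m = int i then m + 1 else if m = int i + 1 then m - 1
      else if m = DD - int i then m - 1 else if m = DD - int i - 1 then m + 1 else m)"
    unfolding rf_def pa_def pb_def e using assms(1,2) c by simp
  moreover consider "m = 0" | "1 \<le> m" "m < int i" | "m = int i" | "m = int i + 1"
    | "int i + 2 \<le> m" "m \<le> int d" | "m = int d + 1" | "int d + 2 \<le> m" "m < DD - int i - 1"
    | "m = DD - int i - 1" | "m = DD - int i" | "DD - int i < m" "m < DD" using assms D by linarith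
  ultimately show ?thesis using D assms(1,2) by cases simp_all
qed

lemma sref_rf_pt:
  assumes "i \<le> d" "0 \<le> m" "m < DD"
  shows "sref d i m = rf (pa i) (pb i) m"
  using sref_rf_pt0[OF _ assms(2,3)] sref_rf_ptd[OF _ assms(2,3)] sref_rf_pti[OF _ _ assms(2,3)] assms(1)
  by (cases "i = 0"; cases "i = d") auto

lemma sref_rf: assumes "i \<le> d" shows "sref d i = rf (pa i) (pb i)"
proof
  fix x
  have m: "0 \<le> x mod DD" "x mod DD < DD" using DD_pos by simp_all
  have "sref d i x = sref d i (x mod DD) + (x div DD) * DD"
    unfolding sref_def by (rule ext_red)
  also have "\<dots> = rf (pa i) (pb i) (x mod DD) + (x div DD) * DD" using sref_rf_pt[OF assms m] by simp
  also have "\<dots> = rf (pa i) (pb i) x" using rf_red[of "pa i" "pb i" x] by simp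
  finally show "sref d i x = rf (pa i) (pb i) x" .
qed


lemma mod0: "(0::int) mod DD = 0" by simp
lemma modd1: "(int d + 1) mod DD = int d + 1" using modc1[of "int d + 1"] DD_eq by simp

lemma pab_facts:
  assumes "i \<le> d"
  shows "pa i < pb i" "valid (pa i) (pb i)"
    "(0 < i \<and> i < d \<and> pb i - pa i = 1) \<or> (pb i - pa i = 2 \<and> eqm (pa i) (- pb i) \<and> eqm (pb i) (- pa i)
        \<and> (eqm (pa i + 1) 0 \<or> eqm (pa i + 1) (int d + 1)))"
proof -
  have D: "DD = 2 * int d + 2" by (rule DD_eq)
  have d2': "int d \<ge> 2" using d2 by simp
  consider "i = 0" | "i = d" | "0 < i" "i < d" using assms by linarith
  then have "pa i < pb i \<and> valid (pa i) (pb i) \<and> ((0 < i \<and> i < d \<and> pb i - pa i = 1) \<or> (pb i - pa i = 2 \<and> eqm (pa i) (- pb i) \<and> eqm (pb i) (- pa i)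
        \<and> (eqm (pa i + 1) 0 \<or> eqm (pa i + 1) (int d + 1))))"
  proof cases
    case 1
    have c: "(-1) mod DD = DD - 1" "1 mod DD = 1" "(-1::int) mod DD = DD - 1"
      using modc2[of 1] modc1[of 1] D d2' by simp_all
    show ?thesis using 1 c D d2' mod0 modd1 unfolding valid_def eqm_def pa_def pb_def by simp
  next
    case 2
    have c: "int d mod DD = int d" "(int d + 2) mod DD = int d + 2" "(- int d) mod DD = int d + 2"
       "(- (int d + 2)) mod DD = int d"
      using modc2[of "int d"] modc1[of "int d"] modc1[of "int d + 2"] modc2[of "int d + 2"] D d2' by simp_all
    show ?thesis using 2 c D d2' mod0 modd1 unfolding valid_def eqm_def pa_def pb_def by simp
  next
    case 3
    have c: "int i mod DD = int i" "(int i + 1) mod DD = int i + 1"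
      using modc1[of "int i"] modc1[of "int i + 1"] D 3 by simp_all
    show ?thesis using 3 c D mod0 modd1 unfolding valid_def eqm_def pa_def pb_def by simp
  qed
  thus "pa i < pb i" "valid (pa i) (pb i)"
    "(0 < i \<and> i < d \<and> pb i - pa i = 1) \<or> (pb i - pa i = 2 \<and> eqm (pa i) (- pb i) \<and> eqm (pb i) (- pa i)
        \<and> (eqm (pa i + 1) 0 \<or> eqm (pa i + 1) (int d + 1)))" by auto
qed

lemma sref_W: "i \<le> d \<Longrightarrow> sref d i \<in> Wg"
  using sref_rf rf_W pab_facts by simp

lemma sref_invol: "i \<le> d \<Longrightarrow> sref d i (sref d i x) = x"
  using sref_rf rf_rf pab_facts by simp

lemma sref_comp: "i \<le> d \<Longrightarrow> sref d i \<circ> sref d i = id"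
  using sref_invol by auto

lemma sref_pa: "i \<le> d \<Longrightarrow> sref d i (pa i) = pb i"
  using sref_rf by (simp add: rf_def)

lemma sref_pb: "i \<le> d \<Longrightarrow> sref d i (pb i) = pa i"
proof -
  assume i: "i \<le> d"
  have "sref d i (pb i) = sref d i (sref d i (pa i))" using sref_pa[OF i] by simp
  thus ?thesis using sref_invol[OF i] by simp
qed

lemma rf_cases3: "rf p q x = x \<or> rf p q x = x + (q - p) \<or> rf p q x = x - (q - p)"
  by (simp add: rf_def)

lemma rf_plus: "p < q \<Longrightarrow> rf p q x = x + (q - p) \<Longrightarrow> eqm x p \<or> eqm x (- q)"
  by (auto simp: rf_def split: if_splits)

lemma rf_minus: "p < q \<Longrightarrow> rf p q x = x - (q - p) \<Longrightarrow> eqm x q \<or> eqm x (- p)"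
  by (auto simp: rf_def split: if_splits)

lemma eqm_E: "eqm a p \<Longrightarrow> \<exists>k. a = p + k * DD"
proof -
  assume "eqm a p"
  then obtain k where "p = a + k * DD" unfolding eqm_iff by blast
  hence "a = p + (- k) * DD" by simp
  thus ?thesis by blast
qed

lemma kD_small: assumes "\<bar>k * DD\<bar> < DD" shows "k = 0"
proof (rule ccontr)
  assume "k \<noteq> 0"
  hence "1 \<le> \<bar>k\<bar>" by simp
  hence "1 * DD \<le> \<bar>k\<bar> * DD" using DD_pos by (intro mult_right_mono) auto
  also have "\<dots> = \<bar>k * DD\<bar>" using DD_pos by (simp add: abs_mult)
  finally show False using assms by simp
qed

lemma same_shift:
  assumes "eqm a p" "eqm b q" "\<bar>(b - a) - (q - p)\<bar> < DD"
  shows "rf a b = rf p q"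
proof -
  obtain k1 where k1: "a = p + k1 * DD" using eqm_E[OF assms(1)] by blast
  obtain k2 where k2: "b = q + k2 * DD" using eqm_E[OF assms(2)] by blast
  have "(b - a) - (q - p) = (k2 - k1) * DD" using k1 k2 by (simp add: left_diff_distrib)
  hence "k2 - k1 = 0" using assms(3) kD_small[of "k2 - k1"] by simp
  hence "b = q + k1 * DD" using k2 by simp
  thus ?thesis using k1 rf_shift by simp
qed

lemma even_kD: "\<exists>X. k * DD = 2 * X"
  using DD_eq by (intro exI[of _ "k * (int d + 1)"]) (simp add: algebra_simps)

lemma parity_contra:
  assumes "eqm a p" "eqm b (- p)" "b - a = 1" shows False
proof -
  obtain k1 where k1: "a = p + k1 * DD" using eqm_E[OF assms(1)] by blast
  obtain k2 where k2: "b = - p + k2 * DD" using eqm_E[OF assms(2)] by blast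
  obtain X1 where X1: "k1 * DD = 2 * X1" using even_kD by blast
  obtain X2 where X2: "k2 * DD = 2 * X2" using even_kD by blast
  have "1 = - 2 * p + 2 * X2 - 2 * X1" using k1 k2 X1 X2 assms(3) by simp
  thus False by presburger
qed

lemma reversal:
  assumes i: "i \<le> d" and v: "valid a b" and ab: "a < b" and r: "sref d i b < sref d i a"
  shows "rf a b = sref d i"
proof -
  define p where "p = pa i"
  define q where "q = pb i"
  have s: "sref d i = rf p q" unfolding p_def q_def using sref_rf[OF i] .
  have pq: "p < q" "valid p q" unfolding p_def q_def using pab_facts[OF i] by auto
  have tyq: "q - p = 1 \<or> (q - p = 2 \<and> eqm p (- q) \<and> eqm q (- p) \<and> (eqm (p + 1) 0 \<or> eqm (p + 1) (int d + 1)))"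
    unfolding p_def q_def using pab_facts[OF i] by auto
  have D6: "DD \<ge> 6" using DD_eq d2 by simp
  define u where "u = rf p q a - a"
  define v' where "v' = rf p q b - b"
  have uv: "b - a < u - v'" using r s unfolding u_def v'_def by simp
  have u3: "u = 0 \<or> u = q - p \<or> u = - (q - p)" unfolding u_def using rf_cases3[of p q a] by auto
  have v3: "v' = 0 \<or> v' = q - p \<or> v' = - (q - p)" unfolding v'_def using rf_cases3[of p q b] by auto
  have up: "u = q - p \<Longrightarrow> eqm a p \<or> eqm a (- q)" using rf_plus[OF pq(1), of a] unfolding u_def by simp
  have vm: "v' = - (q - p) \<Longrightarrow> eqm b q \<or> eqm b (- p)" using rf_minus[OF pq(1), of b] unfolding v'_def by simp
  have vb: "\<not> eqm b 0" "\<not> eqm b (int d + 1)" "\<not> eqm a 0" "\<not> eqm a (int d + 1)" using v unfolding valid_def by auto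
  consider "u = q - p" "v' = - (q - p)" | "u = q - p" "v' = 0" | "u = 0" "v' = - (q - p)"
    using u3 v3 uv pq(1) ab by fastforce
  thus ?thesis
  proof cases
    case 1
    have ea: "eqm a p \<or> eqm a (- q)" using up 1 by simp
    have eb: "eqm b q \<or> eqm b (- p)" using vm 1 by simp
    have small: "\<bar>(b - a) - (q - p)\<bar> < DD" using uv 1 ab tyq D6 by auto
    have small2: "\<bar>(b - a) - ((- p) - (- q))\<bar> < DD" using small by simp
    have sw: "rf (- q) (- p) = rf p q" using rf_swap_neg[OF pq(2)] .
    show ?thesis
    proof (cases "q - p = 1")
      case True
      have ba: "b - a = 1" using uv 1 True ab by simp
      from ea eb show ?thesis
      proof (elim disjE)
        assume "eqm a p" "eqm b q" thus ?thesis using same_shift small s by simp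
      next
        assume "eqm a p" "eqm b (- p)" thus ?thesis using parity_contra ba by blast
      next
        assume "eqm a (- q)" "eqm b q"
        hence "eqm b (- (- q))" by simp
        thus ?thesis using parity_contra[OF \<open>eqm a (- q)\<close>] ba by blast
      next
        assume "eqm a (- q)" "eqm b (- p)" thus ?thesis using same_shift[OF _ _ small2] sw s by simp
      qed
    next
      case False
      hence t: "eqm p (- q)" "eqm q (- p)" using tyq by auto
      have "eqm a p" using ea t eqm_trans eqm_sym by blast
      moreover have "eqm b q" using eb t eqm_trans eqm_sym by blast
      ultimately show ?thesis using same_shift small s by simp
    qed
  next
    case 2
    have t: "q - p = 2" "eqm p (- q)" "eqm (p + 1) 0 \<or> eqm (p + 1) (int d + 1)" using tyq uv 2 ab by auto
    have "eqm a p" using up 2 t eqm_trans eqm_sym by blast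
    moreover have "b = a + 1" using uv 2 t ab by simp
    ultimately have "eqm b (p + 1)" using eqm_add by simp
    thus ?thesis using t(3) vb eqm_trans by blast
  next
    case 3
    have t: "q - p = 2" "eqm q (- p)" "eqm (p + 1) 0 \<or> eqm (p + 1) (int d + 1)" using tyq uv 3 ab by auto
    have "eqm b q" using vm 3 t eqm_trans eqm_sym by blast
    moreover have "a = b - 1" using uv 3 t ab by simp
    ultimately have "eqm a (q - 1)" using eqm_add[of b q "- 1"] by simp
    moreover have "q - 1 = p + 1" using t by simp
    ultimately show ?thesis using t(3) vb eqm_trans by auto
  qed
qed

end


context dctx begin

abbreviation sr :: "nat \<Rightarrow> int \<Rightarrow> int" where "sr i \<equiv> sref d i"

lemma sr_conj: assumes i: "i \<le> d" shows "sr i \<circ> rf a b \<circ> sr i = rf (sr i a) (sr i b)"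
proof
  fix y
  have "sr i (rf a b (sr i y)) = rf (sr i a) (sr i b) (sr i (sr i y))" by (rule rf_conj[OF sref_W[OF i]])
  thus "(sr i \<circ> rf a b \<circ> sr i) y = rf (sr i a) (sr i b) y" using sref_invol[OF i] by simp
qed

lemma sr_Inv_iff: assumes w: "w \<in> Wg" and i: "i \<le> d" shows "sr i \<in> Inv w \<longleftrightarrow> w (pb i) < w (pa i)"
  using Inv_mem[OF w, of "pa i" "pb i"] pab_facts[OF i] sref_rf[OF i] by simp

lemma conj_invol: "i \<le> d \<Longrightarrow> sr i \<circ> (sr i \<circ> t \<circ> sr i) \<circ> sr i = t"
  using sref_invol by (simp add: fun_eq_iff)

lemma K1: assumes w: "w \<in> Wg" and i: "i \<le> d" and t: "t \<in> Inv (w \<circ> sr i)" "t \<noteq> sr i"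
  shows "sr i \<circ> t \<circ> sr i \<in> Inv w"
proof -
  obtain a b where ab: "t = rf a b" "a < b" "valid a b" "w (sr i b) < w (sr i a)"
    using t(1) unfolding Inv_def by auto
  have sW: "sr i \<in> Wg" using sref_W[OF i] .
  have "\<not> sr i b < sr i a" using reversal[OF i ab(3,2)] ab(1) t(2) by auto
  moreover have "sr i a \<noteq> sr i b" using ab(2) W_inj[OF sW] by (metis inj_eq less_irrefl)
  ultimately have lt: "sr i a < sr i b" by linarith
  have "sr i \<circ> t \<circ> sr i = rf (sr i a) (sr i b)" using sr_conj[OF i] ab(1) by simp
  moreover have "valid (sr i a) (sr i b)" using valid_W[OF sW] ab(3) by simp
  ultimately show ?thesis using lt ab(4) unfolding Inv_def by auto
qed

lemma K2: assumes w: "w \<in> Wg" and i: "i \<le> d" and t: "t \<in> Inv w" "t \<noteq> sr i"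
  shows "sr i \<circ> t \<circ> sr i \<in> Inv (w \<circ> sr i)"
proof -
  obtain a b where ab: "t = rf a b" "a < b" "valid a b" "w b < w a"
    using t(1) unfolding Inv_def by auto
  have sW: "sr i \<in> Wg" using sref_W[OF i] .
  have "\<not> sr i b < sr i a" using reversal[OF i ab(3,2)] ab(1) t(2) by auto
  moreover have "sr i a \<noteq> sr i b" using ab(2) W_inj[OF sW] by (metis inj_eq less_irrefl)
  ultimately have lt: "sr i a < sr i b" by linarith
  have "sr i \<circ> t \<circ> sr i = rf (sr i a) (sr i b)" using sr_conj[OF i] ab(1) by simp
  moreover have "valid (sr i a) (sr i b)" using valid_W[OF sW] ab(3) by simp
  moreover have "(w \<circ> sr i) (sr i b) < (w \<circ> sr i) (sr i a)" using ab(4) sref_invol[OF i] by simp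
  ultimately show ?thesis using lt unfolding Inv_def by blast
qed

lemma K3: assumes w: "w \<in> Wg" and i: "i \<le> d"
  shows "sr i \<in> Inv (w \<circ> sr i) \<longleftrightarrow> sr i \<notin> Inv w"
proof -
  have wsW: "w \<circ> sr i \<in> Wg" using W_comp[OF w sref_W[OF i]] .
  have "sr i \<in> Inv (w \<circ> sr i) \<longleftrightarrow> w (pa i) < w (pb i)"
    using sr_Inv_iff[OF wsW i] sref_pa[OF i] sref_pb[OF i] by simp
  moreover have "w (pa i) \<noteq> w (pb i)" using pab_facts(1)[OF i] W_inj[OF w] by (metis inj_eq less_irrefl)
  ultimately show ?thesis using sr_Inv_iff[OF w i] by auto
qed

lemma Inv_minus: assumes w: "w \<in> Wg" and i: "i \<le> d"
  shows "Inv (w \<circ> sr i) - {sr i} = (\<lambda>t. sr i \<circ> t \<circ> sr i) ` (Inv w - {sr i})"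
proof
  show "Inv (w \<circ> sr i) - {sr i} \<subseteq> (\<lambda>t. sr i \<circ> t \<circ> sr i) ` (Inv w - {sr i})"
  proof
    fix t assume t: "t \<in> Inv (w \<circ> sr i) - {sr i}"
    have "sr i \<circ> t \<circ> sr i \<in> Inv w" using K1[OF w i] t by auto
    moreover have "sr i \<circ> t \<circ> sr i \<noteq> sr i"
    proof
      assume "sr i \<circ> t \<circ> sr i = sr i"
      hence "sr i \<circ> (sr i \<circ> t \<circ> sr i) \<circ> sr i = sr i \<circ> sr i \<circ> sr i" by simp
      thus False using conj_invol[OF i] sref_comp[OF i] t by simp
    qed
    ultimately show "t \<in> (\<lambda>t. sr i \<circ> t \<circ> sr i) ` (Inv w - {sr i})"
      using conj_invol[OF i, of t] by (intro image_eqI[where x="sr i \<circ> t \<circ> sr i"]) auto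
  qed
next
  show "(\<lambda>t. sr i \<circ> t \<circ> sr i) ` (Inv w - {sr i}) \<subseteq> Inv (w \<circ> sr i) - {sr i}"
  proof
    fix t' assume "t' \<in> (\<lambda>t. sr i \<circ> t \<circ> sr i) ` (Inv w - {sr i})"
    then obtain t where t: "t \<in> Inv w" "t \<noteq> sr i" "t' = sr i \<circ> t \<circ> sr i" by auto
    have "t' \<in> Inv (w \<circ> sr i)" using K2[OF w i t(1,2)] t(3) by simp
    moreover have "t' \<noteq> sr i"
    proof
      assume "t' = sr i"
      hence "sr i \<circ> t' \<circ> sr i = sr i \<circ> sr i \<circ> sr i" by simp
      thus False using conj_invol[OF i, of t] sref_comp[OF i] t by simp
    qed
    ultimately show "t' \<in> Inv (w \<circ> sr i) - {sr i}" by simp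
  qed
qed

lemma NN_step: assumes w: "w \<in> Wg" and i: "i \<le> d"
  shows "NN (w \<circ> sr i) = (if sr i \<in> Inv w then NN w - 1 else NN w + 1)"
    "sr i \<in> Inv w \<Longrightarrow> NN w \<ge> 1"
proof -
  have wsW: "w \<circ> sr i \<in> Wg" using W_comp[OF w sref_W[OF i]] .
  have f1: "finite (Inv w)" "finite (Inv (w \<circ> sr i))" using Inv_finite w wsW by auto
  have inj: "inj_on (\<lambda>t. sr i \<circ> t \<circ> sr i) (Inv w - {sr i})"
    by (rule inj_on_inverseI[where g="\<lambda>t. sr i \<circ> t \<circ> sr i"]) (rule conj_invol[OF i])
  have c: "card (Inv (w \<circ> sr i) - {sr i}) = card (Inv w - {sr i})"
    using Inv_minus[OF w i] card_image[OF inj] by simp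
  show "NN (w \<circ> sr i) = (if sr i \<in> Inv w then NN w - 1 else NN w + 1)"
  proof (cases "sr i \<in> Inv w")
    case True
    hence "sr i \<notin> Inv (w \<circ> sr i)" using K3[OF w i] by simp
    hence "card (Inv (w \<circ> sr i)) = card (Inv w) - 1" using c True f1 by (simp add: card_Diff_singleton)
    thus ?thesis using True unfolding NN_def by simp
  next
    case False
    hence "sr i \<in> Inv (w \<circ> sr i)" using K3[OF w i] by simp
    hence "card (Inv (w \<circ> sr i)) - 1 = card (Inv w)" using c False f1 by (simp add: card_Diff_singleton)
    moreover have "card (Inv (w \<circ> sr i)) \<ge> 1" using \<open>sr i \<in> Inv (w \<circ> sr i)\<close> f1
      by (metis One_nat_def Suc_leI card_gt_0_iff empty_iff)
    ultimately show ?thesis using False unfolding NN_def by simp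
  qed
  show "sr i \<in> Inv w \<Longrightarrow> NN w \<ge> 1" using f1 unfolding NN_def
    by (metis One_nat_def Suc_leI card_gt_0_iff empty_iff)
qed

lemma NN_id: "NN id = 0"
proof -
  have "Inv id = {}" unfolding Inv_def by auto
  thus ?thesis unfolding NN_def by simp
qed


definition ci :: "int \<Rightarrow> int" where
  "ci x = (if x mod DD \<le> int d then x mod DD else DD - 1 - x mod DD)"

lemma ci_range: "0 \<le> ci x \<and> ci x \<le> int d"
proof -
  have h: "0 \<le> x mod DD" "x mod DD < DD" using DD_pos by simp_all
  show ?thesis
  proof (cases "x mod DD \<le> int d")
    case True thus ?thesis using h unfolding ci_def by simp
  next
    case False
    hence "ci x = DD - 1 - x mod DD" unfolding ci_def by simp
    thus ?thesis using h False DD_eq by linarith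
  qed
qed

lemma ci_small: "0 \<le> c \<Longrightarrow> c \<le> int d \<Longrightarrow> ci c = c"
  unfolding ci_def using DD_eq by (simp add: mod_pos_pos_trivial)

lemma per_k: assumes "\<And>x. P (x + DD) = P x" shows "P (x + k * DD) = P x"
proof (induction k rule: int_induct[where k=0])
  case base then show ?case by simp
next
  case (step1 i)
  have "P (x + (i + 1) * DD) = P ((x + i * DD) + DD)" by (rule arg_cong[where f=P]) (simp add: algebra_simps)
  thus ?case using step1 assms by simp
next
  case (step2 i)
  have "P (x + i * DD) = P ((x + (i - 1) * DD) + DD)" by (rule arg_cong[where f=P]) (simp add: algebra_simps)
  thus ?case using step2 assms by simp
qed

lemma red:
  assumes p1: "\<And>x. P (x + DD) = P x" and p2: "\<And>x. P (- x - 1) = P x"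
  shows "P x = P (ci x)"
proof -
  have "P x = P (x mod DD + (x div DD) * DD)" by simp
  also have "\<dots> = P (x mod DD)" by (rule per_k[of P, OF p1])
  finally have h: "P x = P (x mod DD)" .
  show ?thesis
  proof (cases "x mod DD \<le> int d")
    case True thus ?thesis using h unfolding ci_def by simp
  next
    case False
    have "P (x mod DD) = P (- (x mod DD) - 1)" using p2 by simp
    also have "\<dots> = P (- (x mod DD) - 1 + DD)" using p1 by simp
    finally show ?thesis using h False unfolding ci_def by (simp add: algebra_simps)
  qed
qed

lemma gap_inv: assumes w: "w \<in> Wg"
  shows "(w (x + DD) < w (x + DD + 1)) = (w x < w (x + 1))"
        "(w (- x - 1) < w (- x - 1 + 1)) = (w x < w (x + 1))"
proof -
  have "w (x + DD + 1) = w ((x + 1) + DD)" by (rule arg_cong[where f=w]) simp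
  also have "\<dots> = w (x + 1) + DD" by (rule W_D[OF w])
  finally show "(w (x + DD) < w (x + DD + 1)) = (w x < w (x + 1))" using W_D[OF w, of x] by simp
  have "w (- x - 1) = w (- (x + 1))" by (rule arg_cong[where f=w]) simp
  also have "\<dots> = - w (x + 1)" by (rule W_neg[OF w])
  finally have 1: "w (- x - 1) = - w (x + 1)" .
  have "w (- x - 1 + 1) = w (- x)" by (rule arg_cong[where f=w]) simp
  also have "\<dots> = - w x" by (rule W_neg[OF w])
  finally show "(w (- x - 1) < w (- x - 1 + 1)) = (w x < w (x + 1))" using 1 by simp
qed

lemma gap_red: assumes w: "w \<in> Wg"
  shows "(w x < w (x + 1)) = (w (ci x) < w (ci x + 1))"
  using red[where P="\<lambda>x. w x < w (x + 1)"] gap_inv[OF w] by blast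

lemma smono_step: fixes f :: "int \<Rightarrow> int" assumes "\<And>x. f x < f (x + 1)" shows "x < y \<Longrightarrow> f x < f y"
proof -
  assume "x < y"
  then obtain n where y: "y = x + 1 + int n" by (metis add.commute add_less_imp_less_left zle_iff_zadd zless_imp_add1_zle)
  have "f x < f (x + 1 + int n)"
  proof (induction n)
    case 0 thus ?case using assms by simp
  next
    case (Suc n)
    have "x + 1 + int (Suc n) = (x + 1 + int n) + 1" by simp
    thus ?case using Suc assms[of "x + 1 + int n"] by simp
  qed
  thus ?thesis using y by simp
qed

lemma incr_id: assumes w: "w \<in> Wg" and inc: "\<And>x. w x < w (x + 1)" shows "w = id"
proof -
  have s1: "w (x + 1) = w x + 1" for x
  proof -
    obtain y where y: "w y = w x + 1" using W_bij[OF w] by (metis bij_pointE)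
    have "\<not> y \<le> x"
    proof
      assume "y \<le> x"
      hence "w y \<le> w x" using smono_step[of w y x, OF inc] by (cases "y = x") auto
      thus False using y by simp
    qed
    hence "x + 1 \<le> y" by simp
    hence "w (x + 1) \<le> w y" using smono_step[of w "x + 1" y, OF inc] by (cases "x + 1 = y") auto
    thus ?thesis using y inc[of x] by simp
  qed
  have "w x = x" for x
  proof (induction x rule: int_induct[where k=0])
    case base thus ?case using W_0[OF w] by simp
  next
    case (step1 i) thus ?case using s1[of i] by simp
  next
    case (step2 i) thus ?case using s1[of "i - 1"] by simp
  qed
  thus ?thesis by auto
qed

lemma descent_exists: assumes w: "w \<in> Wg" and ne: "w \<noteq> id"
  shows "\<exists>i \<le> d. w (pb i) < w (pa i)"
proof (rule ccontr)
  assume "\<not> ?thesis"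
  hence nd: "\<And>i. i \<le> d \<Longrightarrow> \<not> w (pb i) < w (pa i)" by auto
  have inj: "inj w" using W_inj[OF w] .
  have base: "w (int j) < w (int j + 1)" if j: "j \<le> d" for j
  proof -
    consider "j = 0" | "j = d" | "0 < j" "j < d" using j by linarith
    thus ?thesis
    proof cases
      case 1
      have "\<not> w 1 < w (-1)" using nd[of 0] unfolding pa_def pb_def by simp
      hence "0 \<le> w 1" using W_neg[OF w, of 1] by simp
      moreover have "w 1 \<noteq> w 0" by (simp add: inj_eq[OF inj])
      hence "w 1 \<noteq> 0" using W_0[OF w] by simp
      ultimately show ?thesis using 1 W_0[OF w] by simp
    next
      case 2
      have "\<not> w (int d + 2) < w (int d)" using nd[of d] 2 d2 unfolding pa_def pb_def by simp
      moreover have "w (int d + 2) = - w (int d) + DD"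
      proof -
        have "w (int d + 2) = w (- int d + DD)" by (rule arg_cong[where f=w]) (simp add: DD_eq)
        also have "\<dots> = w (- int d) + DD" by (rule W_D[OF w])
        also have "\<dots> = - w (int d) + DD" using W_neg[OF w, of "int d"] by simp
        finally show ?thesis .
      qed
      ultimately have "w (int d) \<le> int d + 1" using DD_eq by simp
      moreover have "w (int d) \<noteq> w (int d + 1)" by (simp add: inj_eq[OF inj])
      hence "w (int d) \<noteq> int d + 1" using W_d1[OF w] by simp
      ultimately show ?thesis using 2 W_d1[OF w] by simp
    next
      case 3
      have "\<not> w (int j + 1) < w (int j)" using nd[of j] 3 unfolding pa_def pb_def by simp
      moreover have "w (int j + 1) \<noteq> w (int j)" by (simp add: inj_eq[OF inj])
      ultimately show ?thesis by simp
    qed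
  qed
  have "w x < w (x + 1)" for x
  proof -
    have "0 \<le> ci x" "ci x \<le> int d" using ci_range by auto
    define j where "j = nat (ci x)"
    have "ci x = int j" "j \<le> d" unfolding j_def using \<open>0 \<le> ci x\<close> \<open>ci x \<le> int d\<close> by simp_all
    thus ?thesis using gap_red[OF w, of x] base by simp
  qed
  thus False using incr_id[OF w] ne by blast
qed

lemma wp_nil: "wordprod d [] = id" by (simp add: wordprod_def)
lemma wp_cons: "wordprod d (i # ws) = sr i \<circ> wordprod d ws" by (simp add: wordprod_def)
lemma wp_snoc: "wordprod d (ws @ [i]) = wordprod d ws \<circ> sr i"
  by (induction ws) (simp_all add: wordprod_def comp_assoc)

lemma wp_W: "set ws \<subseteq> {0..d} \<Longrightarrow> wordprod d ws \<in> Wg"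
  by (induction ws) (auto simp: wp_nil wp_cons W_id intro!: W_comp sref_W)

lemma NN_wp: "set ws \<subseteq> {0..d} \<Longrightarrow> NN (wordprod d ws) \<le> length ws"
proof (induction ws rule: rev_induct)
  case Nil thus ?case by (simp only: wp_nil NN_id list.size(3) order_refl)
next
  case (snoc i ws)
  have i: "i \<le> d" using snoc by auto
  have W: "wordprod d ws \<in> Wg" using snoc wp_W by auto
  have "NN (wordprod d ws \<circ> sr i) \<le> NN (wordprod d ws) + 1"
  proof (cases "sr i \<in> Inv (wordprod d ws)")
    case True
    hence "NN (wordprod d ws \<circ> sr i) = NN (wordprod d ws) - 1" using NN_step(1)[OF W i] by simp
    thus ?thesis by linarith
  next
    case False
    hence "NN (wordprod d ws \<circ> sr i) = NN (wordprod d ws) + 1" using NN_step(1)[OF W i] by simp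
    thus ?thesis by linarith
  qed
  moreover have "NN (wordprod d (ws @ [i])) = NN (wordprod d ws \<circ> sr i)" by (simp only: wp_snoc)
  moreover have "NN (wordprod d ws) \<le> length ws" using snoc by auto
  ultimately show ?case by simp
qed

lemma word_exists: "w \<in> Wg \<Longrightarrow> \<exists>ws. set ws \<subseteq> {0..d} \<and> length ws = NN w \<and> wordprod d ws = w"
proof (induction "NN w" arbitrary: w rule: less_induct)
  case less
  show ?case
  proof (cases "w = id")
    case True thus ?thesis using wp_nil NN_id by (intro exI[of _ "[]"]) auto
  next
    case False
    then obtain i where i: "i \<le> d" "w (pb i) < w (pa i)" using descent_exists less by blast
    have inv: "sr i \<in> Inv w" using sr_Inv_iff[OF less(2) i(1)] i by simp
    have W': "w \<circ> sr i \<in> Wg" using W_comp[OF less(2) sref_W[OF i(1)]] .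
    have N: "NN (w \<circ> sr i) = NN w - 1" "NN w \<ge> 1" using NN_step[OF less(2) i(1)] inv by auto
    then obtain ws where ws: "set ws \<subseteq> {0..d}" "length ws = NN (w \<circ> sr i)" "wordprod d ws = w \<circ> sr i"
      using less(1)[OF _ W'] by fastforce
    have "wordprod d (ws @ [i]) = w \<circ> sr i \<circ> sr i" using ws(3) wp_snoc by simp
    also have "\<dots> = w" using sref_comp[OF i(1)] by (simp add: comp_assoc)
    finally show ?thesis using ws N i(1) by (intro exI[of _ "ws @ [i]"]) auto
  qed
qed

lemma clen_NN: assumes w: "w \<in> Wg" shows "clen d w = NN w"
  unfolding clen_def
proof (rule Least_equality)
  show "\<exists>ws. set ws \<subseteq> {0..d} \<and> length ws = NN w \<and> wordprod d ws = w" using word_exists[OF w] .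
next
  fix n assume "\<exists>ws. set ws \<subseteq> {0..d} \<and> length ws = n \<and> wordprod d ws = w"
  then obtain ws where "set ws \<subseteq> {0..d}" "length ws = n" "wordprod d ws = w" by blast
  thus "NN w \<le> n" using NN_wp by fastforce
qed

lemma wp_rev: "set ws \<subseteq> {0..d} \<Longrightarrow> wordprod d (rev ws) \<circ> wordprod d ws = id"
proof (induction ws)
  case Nil thus ?case by (simp add: wp_nil)
next
  case (Cons i ws)
  have i: "i \<le> d" using Cons by auto
  have "wordprod d (rev (i # ws)) \<circ> wordprod d (i # ws) = wordprod d (rev ws) \<circ> (sr i \<circ> sr i) \<circ> wordprod d ws"
    by (simp add: wp_snoc wp_cons comp_assoc)
  thus ?case using Cons sref_comp[OF i] by simp
qed

lemma inv_wp: assumes "set ws \<subseteq> {0..d}" shows "inv (wordprod d ws) = wordprod d (rev ws)"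
proof (rule inv_unique_comp)
  show "wordprod d (rev ws) \<circ> wordprod d ws = id" using wp_rev[OF assms] .
  show "wordprod d ws \<circ> wordprod d (rev ws) = id" using wp_rev[of "rev ws"] assms by simp
qed

lemma NN_inv_le: assumes w: "w \<in> Wg" shows "NN (inv w) \<le> NN w"
proof -
  obtain ws where ws: "set ws \<subseteq> {0..d}" "length ws = NN w" "wordprod d ws = w" using word_exists[OF w] by blast
  have "inv w = wordprod d (rev ws)" using inv_wp[OF ws(1)] ws(3) by simp
  thus ?thesis using NN_wp[of "rev ws"] ws by simp
qed

lemma NN_inv: assumes w: "w \<in> Wg" shows "NN (inv w) = NN w"
proof -
  have "NN (inv (inv w)) \<le> NN (inv w)" using NN_inv_le W_inv[OF w] by blast
  moreover have "inv (inv w) = w" using W_bij[OF w] by (simp add: inv_inv_eq)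
  ultimately show ?thesis using NN_inv_le[OF w] by simp
qed

lemma NN_sr: "i \<le> d \<Longrightarrow> NN (sr i) = 1"
proof -
  assume i: "i \<le> d"
  have n: "sr i \<notin> Inv id" unfolding Inv_def by auto
  have "NN (id \<circ> sr i) = (if sr i \<in> Inv id then NN id - 1 else NN id + 1)" by (rule NN_step(1)[OF W_id i])
  hence "NN (sr i) = NN id + 1" using n by (simp only: id_comp if_False)
  thus ?thesis using NN_id by simp
qed

end


context dctx begin

lemma nodesc_gap: assumes w: "w \<in> Wg" and j: "j \<le> d" and nd: "\<not> w (pb j) < w (pa j)"
  shows "w (int j) < w (int j + 1)"
proof -
  have inj: "inj w" using W_inj[OF w] .
  consider "j = 0" | "j = d" | "0 < j" "j < d" using j by linarith
  thus ?thesis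
  proof cases
    case 1
    have "\<not> w 1 < w (-1)" using nd 1 unfolding pa_def pb_def by simp
    hence "0 \<le> w 1" using W_neg[OF w, of 1] by simp
    moreover have "w 1 \<noteq> w 0" by (simp add: inj_eq[OF inj])
    hence "w 1 \<noteq> 0" using W_0[OF w] by simp
    ultimately show ?thesis using 1 W_0[OF w] by simp
  next
    case 2
    have "\<not> w (int d + 2) < w (int d)" using nd 2 d2 unfolding pa_def pb_def by simp
    moreover have "w (int d + 2) = - w (int d) + DD"
    proof -
      have "w (int d + 2) = w (- int d + DD)" by (rule arg_cong[where f=w]) (simp add: DD_eq)
      also have "\<dots> = w (- int d) + DD" by (rule W_D[OF w])
      also have "\<dots> = - w (int d) + DD" using W_neg[OF w, of "int d"] by simp
      finally show ?thesis .
    qed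
    ultimately have "w (int d) \<le> int d + 1" using DD_eq by simp
    moreover have "w (int d) \<noteq> w (int d + 1)" by (simp add: inj_eq[OF inj])
    hence "w (int d) \<noteq> int d + 1" using W_d1[OF w] by simp
    ultimately show ?thesis using 2 W_d1[OF w] by simp
  next
    case 3
    have "\<not> w (int j + 1) < w (int j)" using nd 3 unfolding pa_def pb_def by simp
    moreover have "w (int j + 1) \<noteq> w (int j)" by (simp add: inj_eq[OF inj])
    ultimately show ?thesis by simp
  qed
qed

definition cutX :: "nat set \<Rightarrow> int \<Rightarrow> bool" where "cutX X x \<longleftrightarrow> nat (ci x) \<in> X"

definition sameb :: "nat set \<Rightarrow> int \<Rightarrow> int \<Rightarrow> bool" where
  "sameb X y z \<longleftrightarrow> (\<forall>x. min y z \<le> x \<and> x < max y z \<longrightarrow> \<not> cutX X x)"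

definition Stab :: "nat set \<Rightarrow> (int \<Rightarrow> int) set" where
  "Stab X = {w \<in> Wg. \<forall>x. sameb X (w x) x}"

lemma sameb_refl: "sameb X x x" unfolding sameb_def by auto
lemma sameb_sym: "sameb X x y \<Longrightarrow> sameb X y x" unfolding sameb_def by (simp add: min.commute max.commute)
lemma sameb_trans: "sameb X x y \<Longrightarrow> sameb X y z \<Longrightarrow> sameb X x z"
  unfolding sameb_def by (metis linorder_not_le max.cobounded1 max.cobounded2 min.cobounded1 min.cobounded2 min_le_iff_disj le_max_iff_disj order.strict_trans2 order_trans)

lemma sameb_sep: assumes "sameb X u x" "sameb X v y" "x \<le> c" "c < y" "cutX X c"
  shows "u \<le> c \<and> c < v"
proof
  show "u \<le> c"
  proof (rule ccontr)
    assume "\<not> u \<le> c"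
    hence "min u x \<le> c \<and> c < max u x" using assms(3) by auto
    thus False using assms(1,5) unfolding sameb_def by blast
  qed
  show "c < v"
  proof (rule ccontr)
    assume "\<not> c < v"
    hence "min v y \<le> c \<and> c < max v y" using assms(4) by auto
    thus False using assms(2,5) unfolding sameb_def by blast
  qed
qed

lemma ci_eqm: "eqm y z \<Longrightarrow> ci y = ci z" unfolding ci_def eqm_def by simp

lemma ci_neg: "ci (- z - 1) = ci z"
proof -
  define m where "m = z mod DD"
  have m: "0 \<le> m" "m < DD" unfolding m_def using DD_pos by simp_all
  have z: "z = m + (z div DD) * DD" unfolding m_def by simp
  have a: "(- (z div DD) - 1) * DD = - ((z div DD) * DD) - DD" by (simp add: algebra_simps)
  have eq: "- z - 1 = (DD - 1 - m) + (- (z div DD) - 1) * DD" using z a by linarith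
  have "(- z - 1) mod DD = ((DD - 1 - m) + (- (z div DD) - 1) * DD) mod DD"
    by (rule arg_cong[where f="\<lambda>u. u mod DD"]) (rule eq)
  also have "\<dots> = (DD - 1 - m) mod DD" by (rule mod_mult_self1)
  finally have "(- z - 1) mod DD = (DD - 1 - m) mod DD" .
  also have "\<dots> = DD - 1 - m" using m by (simp add: mod_pos_pos_trivial)
  finally have e: "(- z - 1) mod DD = DD - 1 - m" .
  show ?thesis unfolding ci_def e m_def[symmetric] using DD_eq by auto
qed

lemma cross: assumes j: "j \<le> d" and t: "0 \<le> t" "t < pb j - pa j" shows "ci (pa j + t) = int j"
proof -
  have D: "DD = 2 * int d + 2" by (rule DD_eq)
  consider "j = 0" | "j = d" | "0 < j" "j < d" using j by linarith
  thus ?thesis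
  proof cases
    case 1
    hence "t = 0 \<or> t = 1" using t unfolding pa_def pb_def by auto
    moreover have "ci (-1) = 0" using ci_neg[of 0] ci_small[of 0] by simp
    moreover have "ci 0 = 0" using ci_small[of 0] by simp
    ultimately show ?thesis using 1 unfolding pa_def by auto
  next
    case 2
    hence "t = 0 \<or> t = 1" using t d2 unfolding pa_def pb_def by auto
    moreover have "ci (int d) = int d" using ci_small by simp
    moreover have "ci (int d + 1) = int d"
      unfolding ci_def using D by (simp add: mod_pos_pos_trivial)
    ultimately show ?thesis using 2 d2 unfolding pa_def by auto
  next
    case 3
    hence "t = 0" using t unfolding pa_def pb_def by auto
    thus ?thesis using 3 ci_small[of "int j"] unfolding pa_def by simp
  qed
qed

lemma sr_sameb: assumes j: "j \<le> d" "j \<notin> X" shows "sameb X (sr j x) x"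
proof -
  define p where "p = pa j"
  define q where "q = pb j"
  have s: "sr j = rf p q" unfolding p_def q_def using sref_rf[OF j(1)] .
  have pq: "p < q" unfolding p_def q_def using pab_facts[OF j(1)] by auto
  have cr: "0 \<le> t \<Longrightarrow> t < q - p \<Longrightarrow> ci (p + t) = int j" for t unfolding p_def q_def using cross[OF j(1)] by simp
  have nc: "\<not> cutX X y" if "ci y = int j" for y using that j(2) unfolding cutX_def by simp
  have up: "sameb X (x + (q - p)) x" if "eqm x p" for x
    unfolding sameb_def
  proof (intro allI impI)
    fix y assume y: "min (x + (q - p)) x \<le> y \<and> y < max (x + (q - p)) x"
    hence "eqm y (p + (y - x))" using eqm_add[OF that, of "y - x"] by simp
    moreover have "0 \<le> y - x" "y - x < q - p" using y pq by auto
    ultimately show "\<not> cutX X y" using ci_eqm cr nc by metis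
  qed
  have up2: "sameb X (x + (q - p)) x" if "eqm x (- q)" for x
    unfolding sameb_def
  proof (intro allI impI)
    fix y assume y: "min (x + (q - p)) x \<le> y \<and> y < max (x + (q - p)) x"
    hence "eqm y (- q + (y - x))" using eqm_add[OF that, of "y - x"] by simp
    moreover have "- q + (y - x) = - (p + (q - p - 1 - (y - x))) - 1" by simp
    moreover have "0 \<le> q - p - 1 - (y - x)" "q - p - 1 - (y - x) < q - p" using y pq by auto
    ultimately show "\<not> cutX X y" using ci_eqm cr nc ci_neg by metis
  qed
  have dn: "sameb X (x - (q - p)) x" if "eqm x q" for x
  proof -
    have "eqm (x - (q - p)) p" using eqm_move2[OF that] .
    hence "sameb X (x - (q - p) + (q - p)) (x - (q - p))" by (rule up)
    thus ?thesis using sameb_sym by simp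
  qed
  have dn2: "sameb X (x - (q - p)) x" if "eqm x (- p)" for x
  proof -
    have "eqm (x - (q - p)) (- q)" using eqm_move3[OF that] .
    hence "sameb X (x - (q - p) + (q - p)) (x - (q - p))" by (rule up2)
    thus ?thesis using sameb_sym by simp
  qed
  show ?thesis unfolding s rf_def using up up2 dn dn2 sameb_refl by auto
qed

lemma sr_Stab: "j \<le> d \<Longrightarrow> j \<notin> X \<Longrightarrow> sr j \<in> Stab X"
  unfolding Stab_def using sref_W sr_sameb by auto

lemma Stab_comp: "v \<in> Stab X \<Longrightarrow> w \<in> Stab X \<Longrightarrow> v \<circ> w \<in> Stab X"
  unfolding Stab_def using W_comp sameb_trans by fastforce

lemma Stab_id: "id \<in> Stab X" unfolding Stab_def using W_id sameb_refl by auto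

lemma par_sub_Stab: "set ws \<subseteq> {0..d} - X \<Longrightarrow> wordprod d ws \<in> Stab X"
proof (induction ws)
  case Nil thus ?case by (simp only: wp_nil) (rule Stab_id)
next
  case (Cons i ws)
  have "sr i \<circ> wordprod d ws \<in> Stab X" using Cons by (intro Stab_comp sr_Stab) auto
  thus ?case by (simp only: wp_cons)
qed

lemma Stab_sub_par: "w \<in> Stab X \<Longrightarrow> \<exists>ws. set ws \<subseteq> {0..d} - X \<and> wordprod d ws = w"
proof (induction "NN w" arbitrary: w rule: less_induct)
  case less
  have w: "w \<in> Wg" and sb: "\<And>x. sameb X (w x) x" using less(2) unfolding Stab_def by auto
  show ?case
  proof (cases "w = id")
    case True thus ?thesis using wp_nil by (intro exI[of _ "[]"]) auto
  next
    case False
    then obtain i where i: "i \<le> d" "w (pb i) < w (pa i)" using descent_exists w by blast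
    have iX: "i \<notin> X"
    proof
      assume "i \<in> X"
      hence c: "cutX X (int i)" unfolding cutX_def using ci_small[of "int i"] i(1) by simp
      have "pa i \<le> int i" "int i < pb i" unfolding pa_def pb_def using i(1) by auto
      hence "w (pa i) \<le> int i \<and> int i < w (pb i)" using sameb_sep[OF sb sb _ _ c] by blast
      thus False using i(2) by simp
    qed
    have inv: "sr i \<in> Inv w" using sr_Inv_iff[OF w i(1)] i by simp
    have S': "w \<circ> sr i \<in> Stab X" using Stab_comp[OF less(2) sr_Stab[OF i(1) iX]] .
    have N: "NN (w \<circ> sr i) < NN w" using NN_step[OF w i(1)] inv by auto
    obtain ws where ws: "set ws \<subseteq> {0..d} - X" "wordprod d ws = w \<circ> sr i"
      using less(1)[OF N S'] by blast
    have "wordprod d (ws @ [i]) = w \<circ> sr i \<circ> sr i" using ws(2) wp_snoc by simp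
    also have "\<dots> = w" using sref_comp[OF i(1)] by (simp add: comp_assoc)
    finally show ?thesis using ws i(1) iX by (intro exI[of _ "ws @ [i]"]) auto
  qed
qed

lemma par_eq_Stab: "parabolic d ({0..d} - X) = Stab X"
  unfolding parabolic_def using par_sub_Stab Stab_sub_par by blast

definition PSS :: "nat list \<Rightarrow> nat set" where "PSS lam = {psum lam i | i. i \<le> length lam - 2}"

lemma Wpar_Stab: "Wpar d lam = Stab (PSS lam)"
  unfolding Wpar_def Jset_def PSS_def using par_eq_Stab by simp

lemma Dmu_incr:
  assumes h: "h \<in> Dset d mu" and i: "i \<in> Jset d mu"
  shows "\<not> inv h (pb i) < inv h (pa i)"
proof
  assume desc: "inv h (pb i) < inv h (pa i)"
  have hW: "h \<in> Wg" using h unfolding Dset_def Wg_def by simp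
  define g where "g = inv h"
  have gW: "g \<in> Wg" unfolding g_def using W_inv[OF hW] .
  have id: "i \<le> d" using i unfolding Jset_def by auto
  have "sr i \<in> Wpar d mu" unfolding Wpar_def parabolic_def
    using i by (intro CollectI exI[of _ "[i]"]) (simp add: wp_cons wp_nil)
  hence c: "clen d (sr i \<circ> h) = clen d (sr i) + clen d h" using h unfolding Dset_def by auto
  have invg: "inv g = h" unfolding g_def using W_bij[OF hW] by (simp add: inv_inv_eq)
  have invs: "inv (sr i) = sr i" using sref_comp[OF id] by (intro inv_unique_comp) auto
  have "inv (g \<circ> sr i) = inv (sr i) \<circ> inv g"
    using W_bij[OF gW] W_bij[OF sref_W[OF id]] by (simp add: o_inv_distrib)
  hence e: "sr i \<circ> h = inv (g \<circ> sr i)" using invg invs by simp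
  have gsW: "g \<circ> sr i \<in> Wg" using W_comp[OF gW sref_W[OF id]] .
  have inv: "sr i \<in> Inv g" using sr_Inv_iff[OF gW id] desc g_def by simp
  have "clen d (sr i \<circ> h) = NN (g \<circ> sr i)" using e clen_NN W_inv[OF gsW] NN_inv[OF gsW] by simp
  also have "\<dots> = NN g - 1" using NN_step(1)[OF gW id] inv by simp
  finally have 1: "clen d (sr i \<circ> h) = NN g - 1" .
  have "clen d h = NN h" using clen_NN[OF hW] .
  also have "\<dots> = NN g" unfolding g_def using NN_inv[OF hW] by simp
  finally have 2: "clen d h = NN g" .
  have 3: "clen d (sr i) = 1" using clen_NN[OF sref_W[OF id]] NN_sr[OF id] by simp
  show False using c 1 2 3 by simp
qed

lemma Dmu_gap:
  assumes h: "h \<in> Dset d mu" and x: "\<not> cutX (PSS mu) x"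
  shows "inv h x < inv h (x + 1)"
proof -
  have hW: "h \<in> Wg" using h unfolding Dset_def Wg_def by simp
  have gW: "inv h \<in> Wg" using W_inv[OF hW] .
  define j where "j = nat (ci x)"
  have j: "ci x = int j" "j \<le> d" unfolding j_def using ci_range[of x] by auto
  have "j \<in> Jset d mu" using x j unfolding cutX_def Jset_def PSS_def j_def by auto
  hence "\<not> inv h (pb j) < inv h (pa j)" using Dmu_incr[OF h] by blast
  hence "inv h (int j) < inv h (int j + 1)" using nodesc_gap[OF gW j(2)] by blast
  thus ?thesis using gap_red[OF gW, of x] j by simp
qed

end


lemma sum_take_mono: "a \<le> b \<Longrightarrow> sum_list (take a (xs::nat list)) \<le> sum_list (take b xs)"
proof -
  assume "a \<le> b"
  then obtain c where "b = a + c" using le_Suc_ex by blast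
  thus ?thesis by (simp add: take_add)
qed

lemma ivt_int:
  fixes f :: "int \<Rightarrow> int"
  assumes "f a \<le> e" "e < f b" "a < b"
  shows "\<exists>i. a < i \<and> i \<le> b \<and> f (i - 1) \<le> e \<and> e < f i"
proof -
  obtain n where b: "b = a + 1 + int n" using assms(3) by (metis zless_iff_Suc_zadd add.assoc of_nat_Suc add.commute)
  have "\<forall>b. b = a + 1 + int n \<longrightarrow> e < f b \<longrightarrow> (\<exists>i. a < i \<and> i \<le> b \<and> f (i - 1) \<le> e \<and> e < f i)"
  proof (induction n)
    case 0 thus ?case using assms(1) by (auto intro!: exI[of _ "a + 1"])
  next
    case (Suc n)
    show ?case
    proof (intro allI impI)
      fix b assume b: "b = a + 1 + int (Suc n)" "e < f b"
      show "\<exists>i. a < i \<and> i \<le> b \<and> f (i - 1) \<le> e \<and> e < f i"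
      proof (cases "e < f (b - 1)")
        case True
        have "b - 1 = a + 1 + int n" using b by simp
        then obtain i where "a < i \<and> i \<le> b - 1 \<and> f (i - 1) \<le> e \<and> e < f i" using Suc True by blast
        thus ?thesis by auto
      next
        case False
        thus ?thesis using b by (intro exI[of _ b]) auto
      qed
    qed
  qed
  thus ?thesis using b assms(2) by blast
qed

lemma mono_step_int:
  fixes f :: "int \<Rightarrow> int"
  assumes "\<And>x. f x \<le> f (x + 1)" shows "x \<le> y \<Longrightarrow> f x \<le> f y"
proof -
  assume "x \<le> y"
  then obtain n where y: "y = x + int n" by (metis zle_iff_zadd)
  have "f x \<le> f (x + int n)"
  proof (induction n)
    case 0 thus ?case by simp
  next
    case (Suc n)
    have "f (x + int (Suc n)) = f ((x + int n) + 1)" by (rule arg_cong[where f=f]) simp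
    thus ?case using Suc assms[of "x + int n"] by simp
  qed
  thus ?thesis using y by simp
qed

lemma divmod_char:
  fixes x q m n :: int
  assumes "0 < n" "0 \<le> m" "m < n" "x = q * n + m"
  shows "x div n = q" "x mod n = m"
  using assms by (simp_all add: mod_pos_pos_trivial div_pos_pos_trivial add.commute)

locale lctx = dctx +
  fixes r :: nat and lam :: "nat list"
  assumes lamL: "lam \<in> Lam r d"
begin

abbreviation nn :: int where "nn \<equiv> 2 * int r + 2"

definition P :: "nat \<Rightarrow> int" where "P j = int (psum lam j)"

definition eb :: "nat \<Rightarrow> int" where
  "eb m = (if m \<le> r then P m else DD - 1 - P (2 * r + 1 - m))"

definition EE :: "int \<Rightarrow> int" where
  "EE i = (i div nn) * DD + eb (nat (i mod nn))"

lemma len: "length lam = r + 2" and sumd: "sum_list lam = d"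
  using lamL unfolding Lam_def by auto

lemma P_mono: "j \<le> j' \<Longrightarrow> P j \<le> P j'"
  unfolding P_def psum_def using sum_take_mono by simp

lemma P_last: "P (r + 1) = int d"
  unfolding P_def psum_def using len sumd by simp

lemma P_le: "P j \<le> int d"
proof -
  have "P j \<le> P (max j (r + 1))" by (rule P_mono) simp
  also have "\<dots> = int d" unfolding P_def psum_def using len sumd by (simp add: max_def)
  finally show ?thesis .
qed

lemma P_ge: "0 \<le> P j" unfolding P_def by simp

lemma P_Suc: "j + 1 < length lam \<Longrightarrow> P (j + 1) = P j + int (lam ! (j + 1))"
  unfolding P_def psum_def by (simp add: take_Suc_conv_app_nth)

lemma P_0: "P 0 = int (lam ! 0)"
  unfolding P_def psum_def using len by (cases lam) auto

lemma P_r: "P r = int d - int (lam ! (r + 1))"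
  using P_Suc[of r] P_last len by simp

lemma eb_range: "m \<le> 2 * r + 1 \<Longrightarrow> 0 \<le> eb m \<and> eb m < DD"
  unfolding eb_def using P_le[of m] P_ge[of m] P_le[of "2 * r + 1 - m"] P_ge[of "2 * r + 1 - m"] DD_eq by auto

lemma eb_mono: "m < 2 * r + 1 \<Longrightarrow> eb m \<le> eb (m + 1)"
proof -
  assume m: "m < 2 * r + 1"
  consider "m < r" | "m = r" | "r < m" by linarith
  thus ?thesis
  proof cases
    case 1 thus ?thesis unfolding eb_def using P_mono[of m "m + 1"] by simp
  next
    case 2 thus ?thesis unfolding eb_def using P_le[of r] DD_eq by simp
  next
    case 3
    hence "2 * r + 1 - (m + 1) \<le> 2 * r + 1 - m" by simp
    thus ?thesis unfolding eb_def using 3 P_mono by simp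
  qed
qed

lemma nn_pos: "0 < nn" by simp

lemma EE_step: "EE i \<le> EE (i + 1)"
proof -
  define q where "q = i div nn"
  define m where "m = i mod nn"
  have i: "i = q * nn + m" "0 \<le> m" "m < nn" unfolding q_def m_def using div_mult_mod_eq[of i nn] by simp_all
  show ?thesis
  proof (cases "m < nn - 1")
    case True
    have "(i + 1) div nn = q" "(i + 1) mod nn = m + 1" using divmod_char[OF nn_pos, of "m + 1" "i + 1" q] i True by auto
    moreover have "eb (nat m) \<le> eb (nat m + 1)" using eb_mono[of "nat m"] True i by simp
    moreover have "nat (m + 1) = nat m + 1" using i by simp
    ultimately show ?thesis unfolding EE_def q_def[symmetric] m_def[symmetric] by simp
  next
    case False
    hence m: "m = nn - 1" using i by simp
    have "(i + 1) div nn = q + 1" "(i + 1) mod nn = 0" using divmod_char[OF nn_pos, of 0 "i + 1" "q + 1"] i m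
      by (auto simp: algebra_simps)
    moreover have "nat m = 2 * r + 1" using m by simp
    moreover have "eb (2 * r + 1) = DD - 1 - P 0" unfolding eb_def by simp
    moreover have "eb 0 = P 0" unfolding eb_def by simp
    ultimately show ?thesis unfolding EE_def q_def[symmetric] m_def[symmetric] using P_ge[of 0]
      by (simp add: algebra_simps)
  qed
qed

lemma EE_mono: "i \<le> j \<Longrightarrow> EE i \<le> EE j"
  using mono_step_int[of EE, OF EE_step] by blast

lemma EE_shiftk: "EE (i + k * nn) = EE i + k * DD"
proof -
  have "(i + k * nn) div nn = i div nn + k" "(i + k * nn) mod nn = i mod nn" by simp_all
  thus ?thesis unfolding EE_def by (simp add: algebra_simps)
qed

lemma EE_shift: "EE (i + nn) = EE i + DD"
  using EE_shiftk[of i 1] by simp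

lemma EE_neg: "EE (- i - 1) = - EE i - 1"
proof -
  define q where "q = i div nn"
  define m where "m = i mod nn"
  have i: "i = q * nn + m" "0 \<le> m" "m < nn" unfolding q_def m_def using div_mult_mod_eq[of i nn] by simp_all
  have "- i - 1 = (- q - 1) * nn + (nn - 1 - m)" using i by (simp add: algebra_simps)
  hence dm: "(- i - 1) div nn = - q - 1" "(- i - 1) mod nn = nn - 1 - m"
    using divmod_char[OF nn_pos, of "nn - 1 - m" "- i - 1" "- q - 1"] i by auto
  have n: "nat (nn - 1 - m) = 2 * r + 1 - nat m" using i by simp
  have "eb (2 * r + 1 - nat m) = DD - 1 - eb (nat m)"
  proof (cases "nat m \<le> r")
    case True
    hence "\<not> 2 * r + 1 - nat m \<le> r" by simp
    moreover have "2 * r + 1 - (2 * r + 1 - nat m) = nat m" using True by simp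
    ultimately show ?thesis unfolding eb_def using True by simp
  next
    case False
    hence "2 * r + 1 - nat m \<le> r" using i by simp
    thus ?thesis unfolding eb_def using False by simp
  qed
  thus ?thesis unfolding EE_def dm n q_def[symmetric] m_def[symmetric] by (simp add: algebra_simps)
qed

lemma EE_small: "j \<le> r \<Longrightarrow> EE (int j) = P j"
proof -
  assume j: "j \<le> r"
  have "int j div nn = 0" "int j mod nn = int j" using j by (simp_all add: div_pos_pos_trivial mod_pos_pos_trivial)
  thus ?thesis unfolding EE_def eb_def using j by simp
qed

lemma EE_r1: "EE (int r + 1) = DD - 1 - P r"
proof -
  have "(int r + 1) div nn = 0" "(int r + 1) mod nn = int r + 1" by (simp_all add: div_pos_pos_trivial mod_pos_pos_trivial)
  moreover have "nat (int r + 1) = r + 1" by simp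
  ultimately show ?thesis unfolding EE_def eb_def by simp
qed

lemma EE_m1: "EE (- 1) = - P 0 - 1"
  using EE_neg[of 0] EE_small[of 0] by simp

lemma row_exists: "\<exists>i. EE (i - 1) < x \<and> x \<le> EE i"
proof -
  define q where "q = x div DD"
  have x: "q * DD \<le> x" "x < q * DD + DD" unfolding q_def using DD_pos
    by (metis div_mod_decomp_int le_add_same_cancel1 pos_mod_sign) (metis DD_pos add_less_cancel_left div_mod_decomp_int mult.commute pos_mod_bound q_def)
  have "EE (0 + (q - 1) * nn) = EE 0 + (q - 1) * DD" by (rule EE_shiftk)
  hence lo: "EE ((q - 1) * nn) < x" using EE_small[of 0] P_le[of 0] DD_eq x by (simp add: algebra_simps)
  have "EE (0 + (q + 1) * nn) = EE 0 + (q + 1) * DD" by (rule EE_shiftk)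
  hence hi: "x - 1 < EE ((q + 1) * nn)" using EE_small[of 0] P_ge[of 0] x by (simp add: algebra_simps)
  have "(q - 1) * nn < (q + 1) * nn" by (simp add: algebra_simps)
  then obtain i where "EE (i - 1) \<le> x - 1" "x - 1 < EE i"
    using ivt_int[of EE "(q - 1) * nn" "x - 1" "(q + 1) * nn"] lo hi by auto
  thus ?thesis by (intro exI[of _ i]) auto
qed

lemma row_unique: "EE (i - 1) < x \<Longrightarrow> x \<le> EE i \<Longrightarrow> EE (j - 1) < x \<Longrightarrow> x \<le> EE j \<Longrightarrow> i = j"
proof (rule ccontr)
  assume a: "EE (i - 1) < x" "x \<le> EE i" "EE (j - 1) < x" "x \<le> EE j" "i \<noteq> j"
  show False
  proof (cases "i < j")
    case True
    hence "EE i \<le> EE (j - 1)" by (intro EE_mono) simp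
    thus False using a by simp
  next
    case False
    hence "EE j \<le> EE (i - 1)" using a(5) by (intro EE_mono) simp
    thus False using a by simp
  qed
qed


lemma img_add: "(\<lambda>x. x + c) ` S = {y::int. y - c \<in> S}"
proof (rule set_eqI)
  fix y
  show "y \<in> (\<lambda>x. x + c) ` S \<longleftrightarrow> y \<in> {y. y - c \<in> S}"
  proof
    assume "y \<in> (\<lambda>x. x + c) ` S"
    then obtain x where "x \<in> S" "y = x + c" by blast
    thus "y \<in> {y. y - c \<in> S}" by simp
  next
    assume "y \<in> {y. y - c \<in> S}"
    hence "y - c \<in> S" by simp
    thus "y \<in> (\<lambda>x. x + c) ` S" by (rule rev_image_eqI) simp
  qed
qed

lemma img_sub: "(\<lambda>x. c - x) ` S = {y::int. c - y \<in> S}"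
proof (rule set_eqI)
  fix y
  show "y \<in> (\<lambda>x. c - x) ` S \<longleftrightarrow> y \<in> {y. c - y \<in> S}"
  proof
    assume "y \<in> (\<lambda>x. c - x) ` S"
    then obtain x where "x \<in> S" "y = c - x" by blast
    thus "y \<in> {y. c - y \<in> S}" by simp
  next
    assume "y \<in> {y. c - y \<in> S}"
    hence "c - y \<in> S" by simp
    thus "y \<in> (\<lambda>x. c - x) ` S" by (rule rev_image_eqI) simp
  qed
qed

lemma EE_prev:
  assumes "1 \<le> i mod nn"
  shows "EE (i - 1) = (i div nn) * DD + eb (nat (i mod nn) - 1)"
proof -
  have i: "i = (i div nn) * nn + i mod nn" "i mod nn < nn" using div_mult_mod_eq[of i nn] by simp_all
  have "i - 1 = (i div nn) * nn + (i mod nn - 1)" using i by linarith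
  hence "(i - 1) div nn = i div nn" "(i - 1) mod nn = i mod nn - 1"
    using divmod_char[OF nn_pos, of "i mod nn - 1" "i - 1" "i div nn"] assms i by auto
  moreover have "nat (i mod nn - 1) = nat (i mod nn) - 1" using assms by simp
  ultimately show ?thesis unfolding EE_def by simp
qed

lemma EE_prev0:
  assumes "i mod nn = 0"
  shows "EE (i - 1) = (i div nn) * DD - 1 - P 0"
proof -
  have i: "i = (i div nn) * nn" using div_mult_mod_eq[of i nn] assms by simp
  have "i - 1 = (i div nn - 1) * nn + (nn - 1)" using i by (simp add: algebra_simps)
  hence "(i - 1) div nn = i div nn - 1" "(i - 1) mod nn = nn - 1"
    using divmod_char[OF nn_pos, of "nn - 1" "i - 1" "i div nn - 1"] by auto
  moreover have "nat (nn - 1) = 2 * r + 1" by simp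
  moreover have "eb (2 * r + 1) = DD - 1 - P 0" unfolding eb_def by simp
  ultimately have "EE (i - 1) = (i div nn - 1) * DD + (DD - 1 - P 0)" unfolding EE_def by simp
  moreover have "(i div nn - 1) * DD = i div nn * DD - DD" by (simp add: left_diff_distrib)
  ultimately show ?thesis by linarith
qed

lemma Rset_EE: "Rset d lam i = {x. EE (i - 1) < x \<and> x \<le> EE i}"
proof -
  define q where "q = i div nn"
  define m where "m = i mod nn"
  have m: "0 \<le> m" "m < nn" unfolding m_def by simp_all
  have rr: "length lam - 2 = r" using len by simp
  have R: "Rset d lam i = (if m \<le> int r + 1 then (\<lambda>x. x + q * DD) ` Rbase d lam (nat m)
       else (\<lambda>x. (q + 1) * DD - x) ` Rbase d lam (nat (nn - m)))"
    unfolding Rset_def Let_def rr q_def m_def by simp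
  have Ei: "EE i = q * DD + eb (nat m)" unfolding EE_def q_def m_def by simp
  have Pm: "\<And>j. 1 \<le> j \<Longrightarrow> j \<le> r \<Longrightarrow> int (psum lam (j - 1)) = P (j - 1)" unfolding P_def by simp
  consider "m = 0" | "1 \<le> m" "m \<le> int r" | "m = int r + 1" | "int r + 2 \<le> m" using m by linarith
  thus ?thesis
  proof cases
    case 1
    have E1: "EE (i - 1) = q * DD - 1 - P 0" using EE_prev0 1 unfolding q_def m_def by simp
    have "Rbase d lam (nat m) = {- int (lam ! 0) .. int (lam ! 0)}"
      unfolding Rbase_def Let_def rr using 1 by simp
    hence "Rset d lam i = (\<lambda>x. x + q * DD) ` {- int (lam ! 0) .. int (lam ! 0)}"
      using R 1 by simp
    also have "\<dots> = {x. EE (i - 1) < x \<and> x \<le> EE i}"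
      unfolding img_add Ei E1 using 1 P_0 unfolding eb_def by auto
    finally show ?thesis .
  next
    case 2
    have "nat m - 1 \<le> r" using 2 by simp
    hence E1: "EE (i - 1) = q * DD + P (nat m - 1)" using EE_prev[of i] 2 unfolding q_def m_def eb_def by simp
    have "Rbase d lam (nat m) = {int (psum lam (nat m - 1)) <.. int (psum lam (nat m))}"
      unfolding Rbase_def Let_def rr using 2 by auto
    hence "Rset d lam i = (\<lambda>x. x + q * DD) ` {int (psum lam (nat m - 1)) <.. int (psum lam (nat m))}"
      using R 2 by simp
    also have "\<dots> = {x. EE (i - 1) < x \<and> x \<le> EE i}"
      unfolding img_add Ei E1 using 2 unfolding eb_def P_def by auto
    finally show ?thesis .
  next
    case 3
    have n: "nat m = r + 1" using 3 by simp
    have "EE (i - 1) = q * DD + eb (nat m - 1)" using EE_prev[of i] 3 unfolding q_def m_def by simp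
    hence E1: "EE (i - 1) = q * DD + P r" using n unfolding eb_def by simp
    have "Rbase d lam (nat m) = {int d + 1 - int (lam ! (r + 1)) .. int d + 1 + int (lam ! (r + 1))}"
      unfolding Rbase_def Let_def rr n by simp
    hence "Rset d lam i = (\<lambda>x. x + q * DD) ` {int d + 1 - int (lam ! (r + 1)) .. int d + 1 + int (lam ! (r + 1))}"
      using R 3 by simp
    also have "\<dots> = {x. EE (i - 1) < x \<and> x \<le> EE i}"
      unfolding img_add Ei E1 n using P_r DD_eq unfolding eb_def by auto
    finally show ?thesis .
  next
    case 4
    define j where "j = nat (nn - m)"
    have j: "1 \<le> j" "j \<le> r" "int j = nn - m" unfolding j_def using 4 m by auto
    have E1: "EE (i - 1) = q * DD + DD - 1 - P j"
    proof -
      have "EE (i - 1) = q * DD + eb (nat m - 1)" using EE_prev[of i] 4 unfolding q_def m_def by simp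
      moreover have "\<not> nat m - 1 \<le> r" "2 * r + 1 - (nat m - 1) = j" using 4 j by auto
      ultimately show ?thesis unfolding eb_def by simp
    qed
    have E2: "EE i = q * DD + DD - 1 - P (j - 1)"
    proof -
      have "\<not> nat m \<le> r" "2 * r + 1 - nat m = j - 1" using 4 j by auto
      thus ?thesis using Ei unfolding eb_def by simp
    qed
    have "Rbase d lam j = {int (psum lam (j - 1)) <.. int (psum lam j)}"
      unfolding Rbase_def Let_def rr using j by auto
    hence "Rset d lam i = (\<lambda>x. (q + 1) * DD - x) ` {int (psum lam (j - 1)) <.. int (psum lam j)}"
      using R 4 unfolding j_def by simp
    also have "\<dots> = {x. EE (i - 1) < x \<and> x \<le> EE i}"
      unfolding img_sub E1 E2 unfolding P_def by (auto simp: algebra_simps)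
    finally show ?thesis .
  qed
qed

lemma PSS_lam: "PSS lam = {psum lam j | j. j \<le> r}"
  unfolding PSS_def using len by simp

lemma cut_EE: "cutX (PSS lam) x \<longleftrightarrow> (\<exists>i. x = EE i)"
proof
  assume "\<exists>i. x = EE i"
  then obtain i where x: "x = EE i" by blast
  define q where "q = i div nn"
  define m where "m = nat (i mod nn)"
  have "i mod nn < nn" by simp
  hence m: "m \<le> 2 * r + 1" unfolding m_def by linarith
  have xe: "x = eb m + q * DD" unfolding x EE_def q_def m_def by simp
  have "x mod DD = eb m" using eb_range[OF m] xe by (simp add: mod_pos_pos_trivial)
  show "cutX (PSS lam) x"
  proof (cases "m \<le> r")
    case True
    hence "ci x = P m" unfolding ci_def using \<open>x mod DD = eb m\<close> P_le unfolding eb_def by simp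
    thus ?thesis unfolding cutX_def PSS_lam P_def using True by auto
  next
    case False
    hence "eb m = DD - 1 - P (2 * r + 1 - m)" unfolding eb_def by simp
    hence "ci x = P (2 * r + 1 - m)" unfolding ci_def using \<open>x mod DD = eb m\<close> P_le[of "2 * r + 1 - m"] DD_eq by simp
    thus ?thesis unfolding cutX_def PSS_lam P_def using False by auto
  qed
next
  assume "cutX (PSS lam) x"
  then obtain j where j: "j \<le> r" "nat (ci x) = psum lam j" unfolding cutX_def PSS_lam by auto
  have cj: "ci x = P j" using j(2) ci_range[of x] unfolding P_def by linarith
  define q where "q = x div DD"
  have xq: "x = q * DD + x mod DD" unfolding q_def by simp
  have mr: "0 \<le> x mod DD" "x mod DD < DD" using DD_pos by simp_all
  show "\<exists>i. x = EE i"
  proof (cases "x mod DD \<le> int d")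
    case True
    hence "x mod DD = P j" using cj unfolding ci_def by simp
    moreover have "EE (int j + q * nn) = EE (int j) + q * DD" by (rule EE_shiftk)
    ultimately show ?thesis using EE_small[OF j(1)] xq by (intro exI[of _ "int j + q * nn"]) simp
  next
    case False
    hence "x mod DD = DD - 1 - P j" using cj unfolding ci_def by simp
    moreover obtain t where t: "t = 2 * r + 1 - j" by blast
    have tt: "t \<le> 2 * r + 1" "\<not> t \<le> r" "2 * r + 1 - t = j" using t j by auto
    have "EE (int t + q * nn) = EE (int t) + q * DD" by (rule EE_shiftk)
    moreover have "EE (int t) = DD - 1 - P j"
    proof -
      have "int t div nn = 0" "int t mod nn = int t"
        using tt by (simp_all add: div_pos_pos_trivial mod_pos_pos_trivial)
      thus ?thesis unfolding EE_def eb_def using tt by simp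
    qed
    ultimately show ?thesis using xq by (intro exI[of _ "int t + q * nn"]) simp
  qed
qed

end


fun PS0 :: "nat \<Rightarrow> nat list \<Rightarrow> nat set" where
  "PS0 s [] = {s}"
| "PS0 s (x # xs) = insert s (PS0 (s + x) xs)"

lemma PS0_first: "s \<in> PS0 s xs" by (cases xs) auto

lemma PS0_last: "s + sum_list xs \<in> PS0 s xs"
proof (induction xs arbitrary: s)
  case Nil thus ?case by simp
next
  case (Cons a xs)
  have "s + a + sum_list xs \<in> PS0 (s + a) xs" by (rule Cons.IH)
  thus ?case by (simp add: add.assoc)
qed

lemma PS0_app: "PS0 s (xs @ ys) = PS0 s xs \<union> PS0 (s + sum_list xs) ys"
proof (induction xs arbitrary: s)
  case Nil thus ?case using PS0_first by auto
next
  case (Cons x xs) thus ?case by (auto simp: add.assoc)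
qed

lemma PS0_snoc: "PS0 s (xs @ [y]) = insert (s + sum_list xs + y) (PS0 s xs)"
  using PS0_app[of s xs "[y]"] PS0_last[of s xs] by auto

lemma PS0_range: "x \<in> PS0 s xs \<Longrightarrow> s \<le> x \<and> x \<le> s + sum_list xs"
  by (induction xs arbitrary: s) fastforce+

lemma PS0_take: "PS0 s xs = {s + sum_list (take t xs) | t. t \<le> length xs}"
proof (induction xs arbitrary: s)
  case Nil thus ?case by simp
next
  case (Cons x xs)
  show ?case
  proof
    show "PS0 s (x # xs) \<subseteq> {s + sum_list (take t (x # xs)) |t. t \<le> length (x # xs)}"
    proof
      fix z assume "z \<in> PS0 s (x # xs)"
      hence "z = s \<or> z \<in> PS0 (s + x) xs" by simp
      thus "z \<in> {s + sum_list (take t (x # xs)) |t. t \<le> length (x # xs)}"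
      proof
        assume "z = s" thus ?thesis by (intro CollectI exI[of _ 0]) simp
      next
        assume "z \<in> PS0 (s + x) xs"
        then obtain t where "t \<le> length xs" "z = s + x + sum_list (take t xs)" using Cons by auto
        thus ?thesis by (intro CollectI exI[of _ "Suc t"]) simp
      qed
    qed
  next
    show "{s + sum_list (take t (x # xs)) |t. t \<le> length (x # xs)} \<subseteq> PS0 s (x # xs)"
    proof
      fix z assume "z \<in> {s + sum_list (take t (x # xs)) |t. t \<le> length (x # xs)}"
      then obtain t where t: "t \<le> length (x # xs)" "z = s + sum_list (take t (x # xs))" by blast
      show "z \<in> PS0 s (x # xs)"
      proof (cases t)
        case 0 thus ?thesis using t by simp
      next
        case (Suc t')
        hence "z \<in> PS0 (s + x) xs" using t Cons by auto
        thus ?thesis by simp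
      qed
    qed
  qed
qed

context dctx begin
lemma PSS_split: "PSS (a # M @ [b]) = PS0 a M"
proof -
  have "PSS (a # M @ [b]) = {psum (a # M @ [b]) i | i. i \<le> length M}" unfolding PSS_def by simp
  also have "\<dots> = {a + sum_list (take t M) | t. t \<le> length M}"
  proof -
    have "psum (a # M @ [b]) i = a + sum_list (take i M)" if "i \<le> length M" for i
      using that by (simp add: psum_def)
    thus ?thesis by (metis (no_types, lifting))
  qed
  finally show ?thesis using PS0_take by simp
qed
end

lemma map_upt_upto: "map (\<lambda>i. h (int i)) [a..<b] = map h [int a .. int b - 1]"
proof (induction b)
  case 0 thus ?case by simp
next
  case (Suc b)
  show ?case
  proof (cases "a \<le> b")
    case True
    have "[int a .. int (Suc b) - 1] = [int a .. int b - 1] @ [int b]"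
      using upto_rec2[of "int a" "int b"] True by simp
    thus ?thesis using Suc True by simp
  next
    case False thus ?thesis by simp
  qed
qed

lemma mono_on_int:
  fixes g :: "int \<Rightarrow> int"
  assumes inc: "\<And>x. a \<le> x \<Longrightarrow> x < b \<Longrightarrow> g x < g (x + 1)"
  shows "a \<le> y \<Longrightarrow> y < y' \<Longrightarrow> y' \<le> b \<Longrightarrow> g y < g y'"
proof -
  assume h: "a \<le> y" "y < y'" "y' \<le> b"
  obtain n where y': "y' = y + 1 + int n" using h(2) by (metis zless_iff_Suc_zadd add.assoc of_nat_Suc add.commute)
  have "y + 1 + int n \<le> b \<Longrightarrow> g y < g (y + 1 + int n)"
  proof (induction n)
    case 0 thus ?case using inc h(1) by simp
  next
    case (Suc n)
    have "g (y + 1 + int (Suc n)) = g ((y + 1 + int n) + 1)" by (rule arg_cong[where f=g]) simp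
    moreover have "g (y + 1 + int n) < g ((y + 1 + int n) + 1)" using inc[of "y + 1 + int n"] Suc h(1) by simp
    ultimately show ?case using Suc by simp
  qed
  thus ?thesis using y' h(3) by simp
qed

lemma mono_on_int_le:
  fixes g :: "int \<Rightarrow> int"
  assumes inc: "\<And>x. a \<le> x \<Longrightarrow> x < b \<Longrightarrow> g x < g (x + 1)"
  shows "a \<le> y \<Longrightarrow> y \<le> y' \<Longrightarrow> y' \<le> b \<Longrightarrow> g y \<le> g y'"
  using mono_on_int[where g=g and a=a and b=b and y=y and y'=y', OF inc] by (cases "y = y'") auto

lemma seg_main:
  fixes E g :: "int \<Rightarrow> int" and s0 s1 lo hi :: int
  assumes Emono: "\<And>i j. i \<le> j \<Longrightarrow> E i \<le> E j"
    and s: "0 \<le> s0" "s0 \<le> s1"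
    and ginc: "\<And>x. s0 < x \<Longrightarrow> x < s1 \<Longrightarrow> g x < g (x + 1)"
    and lohi: "lo \<le> hi + 1"
    and bnd: "\<And>y. s0 < y \<Longrightarrow> y \<le> s1 \<Longrightarrow> E (lo - 1) < g y \<and> g y \<le> E hi"
  defines "F \<equiv> \<lambda>i. card {y. s0 < y \<and> y \<le> s1 \<and> E (i - 1) < g y \<and> g y \<le> E i}"
  shows "sum_list (map F [lo..hi]) = nat (s1 - s0)"
    and "\<And>c. s0 < c \<Longrightarrow> c < s1 \<Longrightarrow> (nat c \<in> PS0 (nat s0) (map F [lo..hi]) \<longleftrightarrow> (\<exists>i. g c \<le> E i \<and> E i < g (c + 1)))"
proof -
  define G where "G = (\<lambda>i. card {y. s0 < y \<and> y \<le> s1 \<and> g y \<le> E i})"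
  have fin: "finite {y. s0 < y \<and> y \<le> s1 \<and> Q y}" for Q
    by (rule finite_subset[of _ "{s0<..s1}"]) auto
  have Gmono: "G i \<le> G j" if "i \<le> j" for i j
    unfolding G_def using Emono[OF that] by (intro card_mono[OF fin]) auto
  have FG: "F i = G i - G (i - 1)" for i
  proof -
    have "{y. s0 < y \<and> y \<le> s1 \<and> E (i - 1) < g y \<and> g y \<le> E i}
        = {y. s0 < y \<and> y \<le> s1 \<and> g y \<le> E i} - {y. s0 < y \<and> y \<le> s1 \<and> g y \<le> E (i - 1)}" by auto
    moreover have "{y. s0 < y \<and> y \<le> s1 \<and> g y \<le> E (i - 1)} \<subseteq> {y. s0 < y \<and> y \<le> s1 \<and> g y \<le> E i}"
      using Emono[of "i - 1" i] by auto
    ultimately show ?thesis unfolding F_def G_def by (simp add: card_Diff_subset fin)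
  qed
  have G0: "G (lo - 1) = 0"
  proof -
    have "{y. s0 < y \<and> y \<le> s1 \<and> g y \<le> E (lo - 1)} = {}" using bnd by force
    hence "G (lo - 1) = card ({}::int set)" unfolding G_def by (simp only:)
    thus ?thesis by simp
  qed
  have Ghi: "G hi = nat (s1 - s0)"
  proof -
    have "{y. s0 < y \<and> y \<le> s1 \<and> g y \<le> E hi} = {s0<..s1}" using bnd by auto
    thus ?thesis unfolding G_def by simp
  qed
  have ind: "lo - 1 + int n \<le> hi \<Longrightarrow> sum_list (map F [lo..lo - 1 + int n]) = G (lo - 1 + int n) \<and>
      PS0 s (map F [lo..lo - 1 + int n]) = {s + G i | i. lo - 1 \<le> i \<and> i \<le> lo - 1 + int n}" for n s
  proof (induction n)
    case 0
    have e: "\<And>i. (lo - 1 \<le> i \<and> i \<le> lo - 1) \<longleftrightarrow> i = lo - 1" by auto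
    have "{s + G i | i. lo - 1 \<le> i \<and> i \<le> lo - 1} = {s}" unfolding e using G0 by auto
    thus ?case using G0 by simp
  next
    case (Suc n)
    define h where "h = lo - 1 + int n"
    have h1: "lo - 1 + int (Suc n) = h + 1" unfolding h_def by simp
    have "lo \<le> h + 1" unfolding h_def by simp
    hence up: "[lo..h + 1] = [lo..h] @ [h + 1]" using upto_rec2[of lo "h + 1"] by simp
    have IH: "sum_list (map F [lo..h]) = G h" "PS0 s (map F [lo..h]) = {s + G i | i. lo - 1 \<le> i \<and> i \<le> h}"
      using Suc h_def by auto
    have gm: "G h \<le> G (h + 1)" using Gmono by simp
    have s1: "sum_list (map F [lo..h + 1]) = G (h + 1)" using up IH FG gm by simp
    have "PS0 s (map F [lo..h + 1]) = insert (s + G (h + 1)) {s + G i | i. lo - 1 \<le> i \<and> i \<le> h}"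
      using up IH FG gm PS0_snoc[of s "map F [lo..h]" "F (h + 1)"] by simp
    also have "\<dots> = {s + G i | i. lo - 1 \<le> i \<and> i \<le> h + 1}"
    proof (rule set_eqI, rule iffI)
      fix z assume "z \<in> insert (s + G (h + 1)) {s + G i | i. lo - 1 \<le> i \<and> i \<le> h}"
      moreover have "lo - 1 \<le> h + 1" unfolding h_def by simp
      ultimately show "z \<in> {s + G i | i. lo - 1 \<le> i \<and> i \<le> h + 1}" by force
    next
      fix z assume "z \<in> {s + G i | i. lo - 1 \<le> i \<and> i \<le> h + 1}"
      then obtain i where "lo - 1 \<le> i" "i \<le> h + 1" "z = s + G i" by blast
      thus "z \<in> insert (s + G (h + 1)) {s + G i | i. lo - 1 \<le> i \<and> i \<le> h}" by (cases "i = h + 1") auto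
    qed
    finally show ?case using s1 h1 by simp
  qed
  define n where "n = nat (hi - lo + 1)"
  have n: "hi = lo - 1 + int n" unfolding n_def using lohi by simp
  have main: "sum_list (map F [lo..hi]) = G hi" "PS0 s (map F [lo..hi]) = {s + G i | i. lo - 1 \<le> i \<and> i \<le> hi}" for s
    using ind[of n s] n by auto
  show "sum_list (map F [lo..hi]) = nat (s1 - s0)" using main Ghi by simp
  have gmono: "g y \<le> g y'" if "s0 < y" "y \<le> y'" "y' \<le> s1" for y y'
    using mono_on_int_le[of "s0 + 1" s1 g y y'] ginc that by auto
  have gstr: "g y < g y'" if "s0 < y" "y < y'" "y' \<le> s1" for y y'
    using mono_on_int[of "s0 + 1" s1 g y y'] ginc that by auto
  fix c assume c: "s0 < c" "c < s1"
  show "nat c \<in> PS0 (nat s0) (map F [lo..hi]) \<longleftrightarrow> (\<exists>i. g c \<le> E i \<and> E i < g (c + 1))"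
  proof
    assume "nat c \<in> PS0 (nat s0) (map F [lo..hi])"
    then obtain i where i: "lo - 1 \<le> i" "i \<le> hi" "nat c = nat s0 + G i" using main(2) by auto
    have Gi: "int (G i) = c - s0" using i(3) s c by linarith
    have "g c \<le> E i"
    proof (rule ccontr)
      assume "\<not> g c \<le> E i"
      have "{y. s0 < y \<and> y \<le> s1 \<and> g y \<le> E i} \<subseteq> {s0<..c - 1}"
      proof
        fix y assume y: "y \<in> {y. s0 < y \<and> y \<le> s1 \<and> g y \<le> E i}"
        have "y < c"
        proof (rule ccontr)
          assume "\<not> y < c"
          hence "g c \<le> g y" using gmono[of c y] c y by simp
          thus False using y \<open>\<not> g c \<le> E i\<close> by simp
        qed
        thus "y \<in> {s0<..c - 1}" using y by simp
      qed
      hence "G i \<le> card {s0<..c - 1}" unfolding G_def by (intro card_mono) auto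
      hence "int (G i) \<le> int (nat (c - 1 - s0))" by (simp only: of_nat_le_iff card_greaterThanAtMost_int)
      moreover have "int (nat (c - 1 - s0)) = c - 1 - s0" using c by simp
      ultimately show False using Gi by linarith
    qed
    moreover have "E i < g (c + 1)"
    proof (rule ccontr)
      assume "\<not> E i < g (c + 1)"
      have "{s0<..c + 1} \<subseteq> {y. s0 < y \<and> y \<le> s1 \<and> g y \<le> E i}"
      proof
        fix y assume y: "y \<in> {s0<..c + 1}"
        hence "g y \<le> g (c + 1)" using gmono[of y "c + 1"] c by simp
        thus "y \<in> {y. s0 < y \<and> y \<le> s1 \<and> g y \<le> E i}" using y c \<open>\<not> E i < g (c + 1)\<close> by simp
      qed
      hence "card {s0<..c + 1} \<le> G i" unfolding G_def by (intro card_mono[OF fin])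
      hence "int (nat (c + 1 - s0)) \<le> int (G i)" by (simp only: of_nat_le_iff card_greaterThanAtMost_int)
      moreover have "int (nat (c + 1 - s0)) = c + 1 - s0" using c by simp
      ultimately show False using Gi by linarith
    qed
    ultimately show "\<exists>i. g c \<le> E i \<and> E i < g (c + 1)" by blast
  next
    assume "\<exists>i. g c \<le> E i \<and> E i < g (c + 1)"
    then obtain i where i: "g c \<le> E i" "E i < g (c + 1)" by blast
    have "lo - 1 < i"
    proof (rule ccontr)
      assume "\<not> lo - 1 < i"
      hence "E i \<le> E (lo - 1)" using Emono by simp
      thus False using bnd[of c] c i by simp
    qed
    moreover have "i \<le> hi"
    proof (rule ccontr)
      assume "\<not> i \<le> hi"
      hence "E hi \<le> E i" using Emono by simp
      thus False using bnd[of "c + 1"] c i by simp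
    qed
    moreover have "{y. s0 < y \<and> y \<le> s1 \<and> g y \<le> E i} = {s0<..c}"
    proof (rule set_eqI, rule iffI)
      fix y assume y: "y \<in> {y. s0 < y \<and> y \<le> s1 \<and> g y \<le> E i}"
      have "y \<le> c"
      proof (rule ccontr)
        assume "\<not> y \<le> c"
        hence "g (c + 1) \<le> g y" using gmono[of "c + 1" y] c y by simp
        thus False using y i by simp
      qed
      thus "y \<in> {s0<..c}" using y by simp
    next
      fix y assume "y \<in> {s0<..c}"
      hence "g y \<le> g c" using gmono[of y c] c by simp
      thus "y \<in> {y. s0 < y \<and> y \<le> s1 \<and> g y \<le> E i}" using \<open>y \<in> {s0<..c}\<close> c i by simp
    qed
    hence "G i = nat (c - s0)" unfolding G_def by simp
    hence "nat c = nat s0 + G i" using s c by simp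
    ultimately show "nat c \<in> PS0 (nat s0) (map F [lo..hi])" unfolding main(2) by auto
  qed
qed


lemma sym_card_gt:
  fixes T1 :: "int set"
  assumes "finite T1" "\<forall>y\<in>T1. c < y"
  shows "card (insert c (T1 \<union> (\<lambda>y. 2 * c - y) ` T1)) = 1 + 2 * card T1"
proof -
  have inj: "inj_on (\<lambda>y. 2 * c - y) T1" by (rule inj_onI) simp
  have s1: "T1 \<subseteq> {c<..}" using assms(2) by auto
  have s2: "(\<lambda>y. 2 * c - y) ` T1 \<subseteq> {..<c}"
  proof
    fix z assume "z \<in> (\<lambda>y. 2 * c - y) ` T1"
    then obtain y where "y \<in> T1" "z = 2 * c - y" by blast
    thus "z \<in> {..<c}" using assms(2) by auto
  qed
  have e: "{c<..} \<inter> {..<c} = ({}::int set)" by auto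
  have d1: "T1 \<inter> (\<lambda>y. 2 * c - y) ` T1 = {}" using s1 s2 e by blast
  have c1: "c \<notin> T1 \<union> (\<lambda>y. 2 * c - y) ` T1" using s1 s2 by auto
  have "card (T1 \<union> (\<lambda>y. 2 * c - y) ` T1) = card T1 + card ((\<lambda>y. 2 * c - y) ` T1)"
    using assms(1) d1 by (intro card_Un_disjoint) auto
  also have "\<dots> = 2 * card T1" using card_image[OF inj] by simp
  finally show ?thesis using c1 assms(1) by simp
qed

lemma sym_card_lt:
  fixes T1 :: "int set"
  assumes "finite T1" "\<forall>y\<in>T1. y < c"
  shows "card (insert c (T1 \<union> (\<lambda>y. 2 * c - y) ` T1)) = 1 + 2 * card T1"
proof -
  have inj: "inj_on (\<lambda>y. 2 * c - y) T1" by (rule inj_onI) simp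
  have s1: "T1 \<subseteq> {..<c}" using assms(2) by auto
  have s2: "(\<lambda>y. 2 * c - y) ` T1 \<subseteq> {c<..}"
  proof
    fix z assume "z \<in> (\<lambda>y. 2 * c - y) ` T1"
    then obtain y where "y \<in> T1" "z = 2 * c - y" by blast
    thus "z \<in> {c<..}" using assms(2) by auto
  qed
  have e: "{c<..} \<inter> {..<c} = ({}::int set)" by auto
  have d1: "T1 \<inter> (\<lambda>y. 2 * c - y) ` T1 = {}" using s1 s2 e by blast
  have c1: "c \<notin> T1 \<union> (\<lambda>y. 2 * c - y) ` T1" using s1 s2 by auto
  have "card (T1 \<union> (\<lambda>y. 2 * c - y) ` T1) = card T1 + card ((\<lambda>y. 2 * c - y) ` T1)"
    using assms(1) d1 by (intro card_Un_disjoint) auto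
  also have "\<dots> = 2 * card T1" using card_image[OF inj] by simp
  finally show ?thesis using c1 assms(1) by simp
qed

locale gctx = dctx +
  fixes r :: nat and lam mu :: "nat list" and g :: "int \<Rightarrow> int" and k :: "nat \<Rightarrow> nat"
  assumes lamL: "lam \<in> Lam r d" and muL: "mu \<in> Lam r d"
    and gD: "g \<in> Dlm d lam mu" and kv: "kvalid r (kappa d lam g mu) k"

sublocale gctx \<subseteq> L: lctx d r lam
  by (unfold_locales) (rule lamL)

sublocale gctx \<subseteq> M: lctx d r mu
  by (unfold_locales) (rule muL)

context gctx begin

abbreviation A :: "int \<Rightarrow> int \<Rightarrow> nat" where "A \<equiv> kappa d lam g mu"

lemma g_facts: "g \<in> Wg" "inv g \<in> Dset d mu"
proof -
  obtain h where h: "h \<in> Dset d mu" "g = inv h" using gD unfolding Dlm_def by auto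
  have hW: "h \<in> Wg" using h(1) unfolding Dset_def Wg_def by simp
  show "g \<in> Wg" using h(2) W_inv[OF hW] by simp
  have "inv g = h" using h(2) W_bij[OF hW] by (simp add: inv_inv_eq)
  thus "inv g \<in> Dset d mu" using h(1) by simp
qed

lemma gW: "g \<in> Wg" by (rule g_facts(1))

lemma g_inv_inv: "inv (inv g) = g" using W_bij[OF gW] by (simp add: inv_inv_eq)

lemma g_gap: "\<not> cutX (PSS mu) x \<Longrightarrow> g x < g (x + 1)"
  using Dmu_gap[OF g_facts(2)] g_inv_inv by simp

lemma mu_block_nocut: "M.EE (j - 1) < x \<Longrightarrow> x < M.EE j \<Longrightarrow> \<not> cutX (PSS mu) x"
proof
  assume a: "M.EE (j - 1) < x" "x < M.EE j" "cutX (PSS mu) x"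
  then obtain i where i: "x = M.EE i" using M.cut_EE by blast
  show False
  proof (cases "i \<le> j - 1")
    case True thus False using M.EE_mono[OF True] a i by simp
  next
    case False
    hence "j \<le> i" by simp
    thus False using M.EE_mono[of j i] a i by simp
  qed
qed

lemma g_block: "M.EE (j - 1) < x \<Longrightarrow> x + 1 \<le> M.EE j \<Longrightarrow> g x < g (x + 1)"
  using mu_block_nocut g_gap by simp

lemma g_block_mono: assumes "M.EE (j - 1) < y" "y \<le> y'" "y' \<le> M.EE j" shows "g y \<le> g y'"
proof (rule mono_on_int_le[of "M.EE (j - 1) + 1" "M.EE j" g y y'])
  fix x assume "M.EE (j - 1) + 1 \<le> x" "x < M.EE j" thus "g x < g (x + 1)" using g_block[of j x] by simp
qed (use assms in auto)

lemma g_block_smono: assumes "M.EE (j - 1) < y" "y < y'" "y' \<le> M.EE j" shows "g y < g y'"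
proof (rule mono_on_int[of "M.EE (j - 1) + 1" "M.EE j" g y y'])
  fix x assume "M.EE (j - 1) + 1 \<le> x" "x < M.EE j" thus "g x < g (x + 1)" using g_block[of j x] by simp
qed (use assms in auto)

lemma A_eq: "A i j = card {y. M.EE (j - 1) < y \<and> y \<le> M.EE j \<and> L.EE (i - 1) < g y \<and> g y \<le> L.EE i}"
proof -
  have 1: "Rset d lam i \<inter> g ` Rset d mu j = g ` {y \<in> Rset d mu j. g y \<in> Rset d lam i}" by blast
  have 2: "{y \<in> Rset d mu j. g y \<in> Rset d lam i} = {y. M.EE (j - 1) < y \<and> y \<le> M.EE j \<and> L.EE (i - 1) < g y \<and> g y \<le> L.EE i}"
    unfolding L.Rset_EE M.Rset_EE by simp
  have "inj_on g X" for X by (rule inj_on_subset[OF W_inj[OF gW] subset_UNIV])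
  hence "card (g ` {y \<in> Rset d mu j. g y \<in> Rset d lam i}) = card {y \<in> Rset d mu j. g y \<in> Rset d lam i}"
    by (rule card_image)
  thus ?thesis unfolding kappa_def 1 2 .
qed

lemma row_bound:
  assumes j: "j \<le> r + 1" and y: "M.EE (int j - 1) < y" "y \<le> M.EE (int j)"
  shows "\<exists>i. L.EE (i - 1) < g y \<and> g y \<le> L.EE i \<and> \<bar>i - int j\<bar> \<le> int (k j)"
proof -
  obtain i where i: "L.EE (i - 1) < g y" "g y \<le> L.EE i" using L.row_exists by blast
  have fin: "finite {y. M.EE (int j - 1) < y \<and> y \<le> M.EE (int j) \<and> L.EE (i - 1) < g y \<and> g y \<le> L.EE i}"
    by (rule finite_subset[of _ "{M.EE (int j - 1)<..M.EE (int j)}"]) auto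
  have "A i (int j) \<noteq> 0" unfolding A_eq using fin y i by (auto simp: card_eq_0_iff)
  hence "\<bar>i - int j\<bar> \<le> int (k j)" using kv j unfolding kvalid_def by blast
  thus ?thesis using i by blast
qed


definition QQ :: "int \<Rightarrow> bool" where "QQ x \<longleftrightarrow> (\<exists>i. g x \<le> L.EE i \<and> L.EE i < g (x + 1))"

lemma MEE_j: "j \<le> r \<Longrightarrow> M.EE (int j) = M.P j" by (rule M.EE_small)
lemma MEE_jm1: "1 \<le> j \<Longrightarrow> j \<le> r \<Longrightarrow> M.EE (int j - 1) = M.P (j - 1)"
  using M.EE_small[of "j - 1"] by (simp add: of_nat_diff)

lemma col_mid:
  assumes j: "1 \<le> j" "j \<le> r"
  shows "sum_list (map (\<lambda>i. A i (int j)) [int j - int (k j) .. int j + int (k j)]) = psum mu j - psum mu (j - 1)"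
    and "\<And>c. M.P (j - 1) < c \<Longrightarrow> c < M.P j \<Longrightarrow>
      (nat c \<in> PS0 (psum mu (j - 1)) (map (\<lambda>i. A i (int j)) [int j - int (k j) .. int j + int (k j)]) \<longleftrightarrow> QQ c)"
proof -
  define s0 where "s0 = M.P (j - 1)"
  define s1 where "s1 = M.P j"
  have e0: "M.EE (int j - 1) = s0" unfolding s0_def using MEE_jm1[OF j] .
  have e1: "M.EE (int j) = s1" unfolding s1_def using MEE_j[OF j(2)] .
  have s: "0 \<le> s0" "s0 \<le> s1" unfolding s0_def s1_def using M.P_ge M.P_mono[of "j - 1" j] by auto
  have ginc: "g x < g (x + 1)" if "s0 < x" "x < s1" for x
    using g_block[of "int j" x] that e0 e1 by simp
  have bnd: "L.EE (int j - int (k j) - 1) < g y \<and> g y \<le> L.EE (int j + int (k j))" if "s0 < y" "y \<le> s1" for y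
  proof -
    have yy: "M.EE (int j - 1) < y" "y \<le> M.EE (int j)" using that e0 e1 by simp_all
    have jr: "j \<le> r + 1" using j by simp
    obtain i where i: "L.EE (i - 1) < g y" "g y \<le> L.EE i" "\<bar>i - int j\<bar> \<le> int (k j)"
      using row_bound[OF jr yy] by blast
    have "L.EE (int j - int (k j) - 1) \<le> L.EE (i - 1)" using i(3) by (intro L.EE_mono) simp
    moreover have "L.EE i \<le> L.EE (int j + int (k j))" using i(3) by (intro L.EE_mono) simp
    ultimately show ?thesis using i by simp
  qed
  have Feq: "map (\<lambda>i. A i (int j)) [int j - int (k j) .. int j + int (k j)]
      = map (\<lambda>i. card {y. s0 < y \<and> y \<le> s1 \<and> L.EE (i - 1) < g y \<and> g y \<le> L.EE i}) [int j - int (k j) .. int j + int (k j)]"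
    unfolding A_eq e0 e1 ..
  note sm = seg_main[of "L.EE" s0 s1 g "int j - int (k j)" "int j + int (k j)", OF L.EE_mono s ginc _ bnd]
  have "sum_list (map (\<lambda>i. A i (int j)) [int j - int (k j) .. int j + int (k j)]) = nat (s1 - s0)"
    unfolding Feq using sm(1) by simp
  also have "\<dots> = psum mu j - psum mu (j - 1)" unfolding s0_def s1_def M.P_def by simp
  finally show "sum_list (map (\<lambda>i. A i (int j)) [int j - int (k j) .. int j + int (k j)]) = psum mu j - psum mu (j - 1)" .
  fix c assume c: "M.P (j - 1) < c" "c < M.P j"
  have "nat s0 = psum mu (j - 1)" unfolding s0_def M.P_def by simp
  thus "nat c \<in> PS0 (psum mu (j - 1)) (map (\<lambda>i. A i (int j)) [int j - int (k j) .. int j + int (k j)]) \<longleftrightarrow> QQ c"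
    unfolding Feq QQ_def using sm(2)[of c] c s0_def s1_def by simp
qed


lemma g0: "g 0 = 0" using W_0[OF gW] .
lemma gneg: "g (- y) = - g y" using W_neg[OF gW] .

lemma col_0:
  shows "(A 0 0 - 1) div 2 + sum_list (map (\<lambda>i. A (int i) 0) [1..<k 0 + 1]) = psum mu 0"
    and "\<And>c. 0 < c \<Longrightarrow> c < M.P 0 \<Longrightarrow>
      (nat c \<in> PS0 ((A 0 0 - 1) div 2) (map (\<lambda>i. A (int i) 0) [1..<k 0 + 1]) \<longleftrightarrow> QQ c)"
    and "0 < M.P 0 \<Longrightarrow> ((A 0 0 - 1) div 2 = 0 \<longleftrightarrow> QQ 0)"
proof -
  define m where "m = M.P 0"
  define a where "a = L.P 0"
  have m0: "0 \<le> m" "0 \<le> a" unfolding m_def a_def using M.P_ge L.P_ge by auto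
  have ME: "M.EE (0 - 1) = - m - 1" "M.EE 0 = m" unfolding m_def using M.EE_m1 M.EE_small[of 0] by simp_all
  have LE: "L.EE (0 - 1) = - a - 1" "L.EE 0 = a" unfolding a_def using L.EE_m1 L.EE_small[of 0] by simp_all
  define F0 where "F0 = (\<lambda>i. card {y. 0 < y \<and> y \<le> m \<and> L.EE (i - 1) < g y \<and> g y \<le> L.EE i})"
  define a0 where "a0 = (A 0 0 - 1) div 2"
  define cl0 where "cl0 = map (\<lambda>i. A (int i) 0) [1..<k 0 + 1]"
  have ginc: "g x < g (x + 1)" if "0 < x" "x < m" for x using g_block[of 0 x] ME that by simp
  have gpos: "0 < g y" if "0 < y" "y \<le> m" for y using g_block_smono[of 0 0 y] ME that g0 m0 by simp
  have gnp: "g y \<le> 0" if "- m - 1 < y" "y \<le> 0" for y using g_block_mono[of 0 y 0] ME that g0 m0 by simp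
  have bnd: "L.EE (0 - 1) < g y \<and> g y \<le> L.EE (int (k 0))" if "0 < y" "y \<le> m" for y
  proof -
    have yy: "M.EE (int 0 - 1) < y" "y \<le> M.EE (int 0)" using that ME by simp_all
    obtain i where i: "L.EE (i - 1) < g y" "g y \<le> L.EE i" "\<bar>i - int 0\<bar> \<le> int (k 0)"
      using row_bound[OF _ yy] by blast
    have "L.EE i \<le> L.EE (int (k 0))" using i(3) by (intro L.EE_mono) simp
    thus ?thesis using i gpos[OF that] LE m0 by simp
  qed
  have fin: "finite {y. 0 < y \<and> y \<le> m \<and> Q y}" for Q
    by (rule finite_subset[of _ "{0<..m}"]) auto
  have Ai: "A i 0 = F0 i" if "1 \<le> i" for i
  proof -
    have "{y. M.EE (0 - 1) < y \<and> y \<le> M.EE 0 \<and> L.EE (i - 1) < g y \<and> g y \<le> L.EE i}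
        = {y. 0 < y \<and> y \<le> m \<and> L.EE (i - 1) < g y \<and> g y \<le> L.EE i}"
    proof (rule set_eqI, rule iffI)
      fix y assume y: "y \<in> {y. M.EE (0 - 1) < y \<and> y \<le> M.EE 0 \<and> L.EE (i - 1) < g y \<and> g y \<le> L.EE i}"
      have "0 < y"
      proof (rule ccontr)
        assume "\<not> 0 < y"
        hence "g y \<le> 0" using gnp y ME by simp
        moreover have "L.EE 0 \<le> L.EE (i - 1)" using that by (intro L.EE_mono) simp
        ultimately show False using y LE m0 by simp
      qed
      thus "y \<in> {y. 0 < y \<and> y \<le> m \<and> L.EE (i - 1) < g y \<and> g y \<le> L.EE i}" using y ME by simp
    next
      fix y assume "y \<in> {y. 0 < y \<and> y \<le> m \<and> L.EE (i - 1) < g y \<and> g y \<le> L.EE i}"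
      thus "y \<in> {y. M.EE (0 - 1) < y \<and> y \<le> M.EE 0 \<and> L.EE (i - 1) < g y \<and> g y \<le> L.EE i}" using ME by simp
    qed
    thus ?thesis unfolding A_eq F0_def by simp
  qed
  define T1 where "T1 = {y. 0 < y \<and> y \<le> m \<and> L.EE (0 - 1) < g y \<and> g y \<le> L.EE 0}"
  have T: "{y. M.EE (0 - 1) < y \<and> y \<le> M.EE 0 \<and> L.EE (0 - 1) < g y \<and> g y \<le> L.EE 0}
      = insert 0 (T1 \<union> (\<lambda>y. 2 * 0 - y) ` T1)"
  proof (rule set_eqI)
    fix y
    have im: "y \<in> (\<lambda>y. 2 * 0 - y) ` T1 \<longleftrightarrow> - y \<in> T1"
    proof
      assume "y \<in> (\<lambda>y. 2 * 0 - y) ` T1" then obtain z where "z \<in> T1" "y = 2 * 0 - z" by blast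
      thus "- y \<in> T1" by simp
    next
      assume "- y \<in> T1" thus "y \<in> (\<lambda>y. 2 * 0 - y) ` T1" by (intro rev_image_eqI[of "- y"]) auto
    qed
    have gn: "g (- y) = - g y" by (rule gneg)
    have ins: "y \<in> insert 0 (T1 \<union> (\<lambda>y. 2 * 0 - y) ` T1) \<longleftrightarrow> y = 0 \<or> y \<in> T1 \<or> - y \<in> T1"
      using im by blast
    have "y \<in> {y. M.EE (0 - 1) < y \<and> y \<le> M.EE 0 \<and> L.EE (0 - 1) < g y \<and> g y \<le> L.EE 0}
      \<longleftrightarrow> y = 0 \<or> y \<in> T1 \<or> - y \<in> T1"
      unfolding T1_def using ME LE g0 gn m0 by auto
    thus "y \<in> {y. M.EE (0 - 1) < y \<and> y \<le> M.EE 0 \<and> L.EE (0 - 1) < g y \<and> g y \<le> L.EE 0}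
      \<longleftrightarrow> y \<in> insert 0 (T1 \<union> (\<lambda>y. 2 * 0 - y) ` T1)" using ins by blast
  qed
  have a0T: "a0 = F0 0"
  proof -
    have "A 0 0 = card (insert 0 (T1 \<union> (\<lambda>y. 2 * 0 - y) ` T1))" unfolding A_eq T by simp
    also have "\<dots> = 1 + 2 * card T1" using fin unfolding T1_def by (intro sym_card_gt) auto
    finally show ?thesis unfolding a0_def F0_def T1_def by simp
  qed
  have seq: "map F0 [0..int (k 0)] = a0 # cl0"
  proof -
    have "[0..int (k 0)] = 0 # [1..int (k 0)]" using upto_rec1[of 0 "int (k 0)"] by simp
    moreover have "cl0 = map (\<lambda>i. A i 0) [1..int (k 0)]" unfolding cl0_def using map_upt_upto[of "\<lambda>i. A i 0" 1 "k 0 + 1"] by simp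
    moreover have "map (\<lambda>i. A i 0) [1..int (k 0)] = map F0 [1..int (k 0)]" using Ai by simp
    ultimately show ?thesis using a0T by simp
  qed
  note sm = seg_main[of "L.EE" 0 m g 0 "int (k 0)", OF L.EE_mono _ m0(1) ginc _ bnd, folded F0_def]
  show "(A 0 0 - 1) div 2 + sum_list (map (\<lambda>i. A (int i) 0) [1..<k 0 + 1]) = psum mu 0"
    using sm(1) seq unfolding a0_def[symmetric] cl0_def[symmetric] m_def M.P_def by simp
  show "0 < M.P 0 \<Longrightarrow> ((A 0 0 - 1) div 2 = 0 \<longleftrightarrow> QQ 0)"
  proof -
    assume mp: "0 < M.P 0"
    have a0c: "(A 0 0 - 1) div 2 = card T1" using a0T unfolding a0_def F0_def T1_def by simp
    have T1e: "T1 = {y. 0 < y \<and> y \<le> m \<and> g y \<le> a}"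
      unfolding T1_def using gpos LE m0 by force
    have finT: "finite T1" unfolding T1e using fin .
    show ?thesis
    proof
      assume "(A 0 0 - 1) div 2 = 0"
      hence "T1 = {}" using a0c finT by simp
      hence "\<not> g 1 \<le> a" using mp unfolding T1e m_def by auto
      thus "QQ 0" unfolding QQ_def using g0 LE m0 by (intro exI[of _ 0]) simp
    next
      assume "QQ 0"
      then obtain i where i: "0 \<le> L.EE i" "L.EE i < g 1" unfolding QQ_def using g0 by auto
      have "0 \<le> i"
      proof (rule ccontr)
        assume "\<not> 0 \<le> i"
        hence "L.EE i \<le> L.EE (0 - 1)" by (intro L.EE_mono) simp
        thus False using i LE m0 by simp
      qed
      hence ai: "a \<le> L.EE i" using L.EE_mono[of 0 i] LE by simp
      have "T1 = {}"
      proof (rule ccontr)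
        assume "T1 \<noteq> {}"
        then obtain y where y: "y \<in> T1" by blast
        hence "0 < y" "y \<le> m" "g y \<le> a" unfolding T1e by auto
        moreover have "g 1 \<le> g y" using g_block_mono[of 0 1 y] ME \<open>0 < y\<close> \<open>y \<le> m\<close> by simp
        ultimately show False using i ai by simp
      qed
      thus "(A 0 0 - 1) div 2 = 0" using a0c by simp
    qed
  qed
  fix c assume c: "0 < c" "c < M.P 0"
  have "nat c \<in> PS0 0 (a0 # cl0) \<longleftrightarrow> QQ c" using sm(2)[of c] c seq unfolding QQ_def m_def by simp
  moreover have "nat c \<in> PS0 0 (a0 # cl0) \<longleftrightarrow> nat c \<in> PS0 a0 cl0" using c by simp
  ultimately show "nat c \<in> PS0 ((A 0 0 - 1) div 2) (map (\<lambda>i. A (int i) 0) [1..<k 0 + 1]) \<longleftrightarrow> QQ c"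
    unfolding a0_def cl0_def by simp
qed


lemma gd1: "g (int d + 1) = int d + 1" using W_d1[OF gW] .
lemma gR: "g (DD - y) = DD - g y"
proof -
  have "g (DD - y) = g (- y + DD)" by (rule arg_cong[where f=g]) simp
  also have "\<dots> = g (- y) + DD" by (rule W_D[OF gW])
  finally show ?thesis using gneg by simp
qed

lemma col_R:
  shows "psum mu r + sum_list (map (\<lambda>i. A i (int r + 1)) [int r + 1 - int (k (r + 1)) .. int r])
      + (A (int r + 1) (int r + 1) - 1) div 2 = d"
    and "\<And>c. M.P r < c \<Longrightarrow> c < int d \<Longrightarrow>
      (nat c \<in> PS0 (psum mu r) (map (\<lambda>i. A i (int r + 1)) [int r + 1 - int (k (r + 1)) .. int r]) \<longleftrightarrow> QQ c)"
    and "M.P r < int d \<Longrightarrow> ((A (int r + 1) (int r + 1) - 1) div 2 = 0 \<longleftrightarrow> QQ (int d))"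
proof -
  define m where "m = M.P r"
  define a where "a = L.P r"
  define lo where "lo = int r + 1 - int (k (r + 1))"
  have m0: "0 \<le> m" "m \<le> int d" "0 \<le> a" "a \<le> int d" unfolding m_def a_def using M.P_ge M.P_le L.P_ge L.P_le by auto
  have D: "DD = 2 * int d + 2" by (rule DD_eq)
  have ME: "M.EE (int r + 1 - 1) = m" "M.EE (int r + 1) = DD - 1 - m" unfolding m_def using M.EE_small[of r] M.EE_r1 by simp_all
  have LE: "L.EE (int r + 1 - 1) = a" "L.EE (int r + 1) = DD - 1 - a" unfolding a_def using L.EE_small[of r] L.EE_r1 by simp_all
  have LEr: "L.EE (int r) = a" using LE by simp
  define FR where "FR = (\<lambda>i. card {y. m < y \<and> y \<le> int d \<and> L.EE (i - 1) < g y \<and> g y \<le> L.EE i})"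
  have ginc: "g x < g (x + 1)" if "m < x" "x < int d" for x using g_block[of "int r + 1" x] ME that D m0 by simp
  have gltd: "g y < int d + 1" if "m < y" "y \<le> int d" for y
    using g_block_smono[of "int r + 1" y "int d + 1"] ME that D m0 gd1 by simp
  have gged: "int d + 1 \<le> g y" if "int d + 1 \<le> y" "y \<le> DD - 1 - m" for y
    using g_block_mono[of "int r + 1" "int d + 1" y] ME that D m0 gd1 by simp
  have bnd: "L.EE (lo - 1) < g y \<and> g y \<le> L.EE (int r + 1)" if "m < y" "y \<le> int d" for y
  proof -
    have e: "int (r + 1) = int r + 1" by simp
    have yy: "M.EE (int (r + 1) - 1) < y" "y \<le> M.EE (int (r + 1))" unfolding e using that ME D m0 by simp_all
    obtain i where i: "L.EE (i - 1) < g y" "g y \<le> L.EE i" "\<bar>i - int (r + 1)\<bar> \<le> int (k (r + 1))"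
      using row_bound[OF _ yy] by blast
    have "L.EE (lo - 1) \<le> L.EE (i - 1)" unfolding lo_def using i(3) by (intro L.EE_mono) simp
    thus ?thesis using i gltd[OF that] LE D m0 by simp
  qed
  have fin: "finite {y. m < y \<and> y \<le> int d \<and> Q y}" for Q
    by (rule finite_subset[of _ "{m<..int d}"]) auto
  have Ai: "A i (int r + 1) = FR i" if "i \<le> int r" for i
  proof -
    have "{y. M.EE (int r + 1 - 1) < y \<and> y \<le> M.EE (int r + 1) \<and> L.EE (i - 1) < g y \<and> g y \<le> L.EE i}
        = {y. m < y \<and> y \<le> int d \<and> L.EE (i - 1) < g y \<and> g y \<le> L.EE i}"
    proof (rule set_eqI, rule iffI)
      fix y assume y: "y \<in> {y. M.EE (int r + 1 - 1) < y \<and> y \<le> M.EE (int r + 1) \<and> L.EE (i - 1) < g y \<and> g y \<le> L.EE i}"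
      have "L.EE i \<le> L.EE (int r)" using that by (intro L.EE_mono)
      have "y \<le> int d"
      proof (rule ccontr)
        assume "\<not> y \<le> int d"
        hence "int d + 1 \<le> g y" using gged y ME by simp
        thus False using y \<open>L.EE i \<le> L.EE (int r)\<close> LEr m0 by simp
      qed
      thus "y \<in> {y. m < y \<and> y \<le> int d \<and> L.EE (i - 1) < g y \<and> g y \<le> L.EE i}" using y ME by simp
    next
      fix y assume "y \<in> {y. m < y \<and> y \<le> int d \<and> L.EE (i - 1) < g y \<and> g y \<le> L.EE i}"
      thus "y \<in> {y. M.EE (int r + 1 - 1) < y \<and> y \<le> M.EE (int r + 1) \<and> L.EE (i - 1) < g y \<and> g y \<le> L.EE i}"
        using ME D m0 by simp
    qed
    thus ?thesis unfolding A_eq FR_def by simp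
  qed
  define T1 where "T1 = {y. m < y \<and> y \<le> int d \<and> L.EE (int r + 1 - 1) < g y \<and> g y \<le> L.EE (int r + 1)}"
  have T: "{y. M.EE (int r + 1 - 1) < y \<and> y \<le> M.EE (int r + 1) \<and> L.EE (int r + 1 - 1) < g y \<and> g y \<le> L.EE (int r + 1)}
      = insert (int d + 1) (T1 \<union> (\<lambda>y. 2 * (int d + 1) - y) ` T1)"
  proof (rule set_eqI)
    fix y
    have im: "y \<in> (\<lambda>y. 2 * (int d + 1) - y) ` T1 \<longleftrightarrow> DD - y \<in> T1"
    proof
      assume "y \<in> (\<lambda>y. 2 * (int d + 1) - y) ` T1" then obtain z where "z \<in> T1" "y = 2 * (int d + 1) - z" by blast
      thus "DD - y \<in> T1" using D by simp
    next
      assume "DD - y \<in> T1" thus "y \<in> (\<lambda>y. 2 * (int d + 1) - y) ` T1" using D by (intro rev_image_eqI[of "DD - y"]) auto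
    qed
    have ins: "y \<in> insert (int d + 1) (T1 \<union> (\<lambda>y. 2 * (int d + 1) - y) ` T1) \<longleftrightarrow> y = int d + 1 \<or> y \<in> T1 \<or> DD - y \<in> T1"
      using im by blast
    have gy: "g (DD - y) = DD - g y" by (rule gR)
    have "y \<in> {y. M.EE (int r + 1 - 1) < y \<and> y \<le> M.EE (int r + 1) \<and> L.EE (int r + 1 - 1) < g y \<and> g y \<le> L.EE (int r + 1)}
      \<longleftrightarrow> y = int d + 1 \<or> y \<in> T1 \<or> DD - y \<in> T1"
      unfolding T1_def using ME LE gy gd1 m0 D by auto
    thus "y \<in> {y. M.EE (int r + 1 - 1) < y \<and> y \<le> M.EE (int r + 1) \<and> L.EE (int r + 1 - 1) < g y \<and> g y \<le> L.EE (int r + 1)}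
      \<longleftrightarrow> y \<in> insert (int d + 1) (T1 \<union> (\<lambda>y. 2 * (int d + 1) - y) ` T1)" using ins by blast
  qed
  have aT: "(A (int r + 1) (int r + 1) - 1) div 2 = FR (int r + 1)"
  proof -
    have "A (int r + 1) (int r + 1) = card (insert (int d + 1) (T1 \<union> (\<lambda>y. 2 * (int d + 1) - y) ` T1))"
      unfolding A_eq T by simp
    also have "\<dots> = 1 + 2 * card T1" using fin unfolding T1_def by (intro sym_card_lt) auto
    finally show ?thesis unfolding FR_def T1_def by simp
  qed
  define clR where "clR = map (\<lambda>i. A i (int r + 1)) [lo .. int r]"
  define aR where "aR = (A (int r + 1) (int r + 1) - 1) div 2"
  have seq: "map FR [lo..int r + 1] = clR @ [aR]"
  proof -
    have "[lo..int r + 1] = [lo..int r] @ [int r + 1]" using upto_rec2[of lo "int r + 1"] unfolding lo_def by simp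
    moreover have "clR = map FR [lo..int r]" unfolding clR_def using Ai by simp
    ultimately show ?thesis using aT unfolding aR_def by simp
  qed
  have lohi: "lo \<le> int r + 1 + 1" unfolding lo_def by simp
  note sm = seg_main[of "L.EE" m "int d" g lo "int r + 1", OF L.EE_mono m0(1,2) ginc lohi bnd, folded FR_def]
  have nm: "nat m = psum mu r" unfolding m_def M.P_def by simp
  have sumeq: "psum mu r + sum_list clR + aR = d"
    using sm(1) seq nm m0 by simp
  show "psum mu r + sum_list (map (\<lambda>i. A i (int r + 1)) [int r + 1 - int (k (r + 1)) .. int r])
      + (A (int r + 1) (int r + 1) - 1) div 2 = d" using sumeq unfolding clR_def aR_def lo_def .
  show "M.P r < int d \<Longrightarrow> ((A (int r + 1) (int r + 1) - 1) div 2 = 0 \<longleftrightarrow> QQ (int d))"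
  proof -
    assume mp: "M.P r < int d"
    have ac: "(A (int r + 1) (int r + 1) - 1) div 2 = card T1" using aT unfolding FR_def T1_def by simp
    have T1e: "T1 = {y. m < y \<and> y \<le> int d \<and> a < g y}"
      unfolding T1_def using gltd LE D m0 by force
    have finT: "finite T1" unfolding T1e using fin .
    show ?thesis
    proof
      assume "(A (int r + 1) (int r + 1) - 1) div 2 = 0"
      hence "T1 = {}" using ac finT by simp
      hence "\<not> a < g (int d)" using mp unfolding T1e m_def by auto
      thus "QQ (int d)" unfolding QQ_def using gd1 LEr m0 by (intro exI[of _ "int r"]) simp
    next
      assume "QQ (int d)"
      then obtain i where i: "g (int d) \<le> L.EE i" "L.EE i < int d + 1" unfolding QQ_def using gd1 by auto
      have "i \<le> int r"
      proof (rule ccontr)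
        assume "\<not> i \<le> int r"
        hence "L.EE (int r + 1) \<le> L.EE i" by (intro L.EE_mono) simp
        thus False using i LE D m0 by simp
      qed
      hence ai: "L.EE i \<le> a" using L.EE_mono[of i "int r"] LEr by simp
      have "T1 = {}"
      proof (rule ccontr)
        assume "T1 \<noteq> {}"
        then obtain y where y: "y \<in> T1" by blast
        hence "m < y" "y \<le> int d" "a < g y" unfolding T1e by auto
        moreover have "g y \<le> g (int d)" using g_block_mono[of "int r + 1" y "int d"] ME D m0 \<open>m < y\<close> \<open>y \<le> int d\<close> by simp
        ultimately show False using i ai by simp
      qed
      thus "(A (int r + 1) (int r + 1) - 1) div 2 = 0" using ac by simp
    qed
  qed
  fix c assume c: "M.P r < c" "c < int d"
  have "nat c \<in> PS0 (nat m) (clR @ [aR]) \<longleftrightarrow> QQ c" using sm(2)[of c] c seq unfolding QQ_def m_def by simp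
  moreover have "PS0 (nat m) (clR @ [aR]) = insert d (PS0 (nat m) clR)"
    using PS0_snoc[of "nat m" clR aR] sumeq nm by simp
  moreover have "nat c \<noteq> d"
  proof
    assume "nat c = d"
    moreover have "0 \<le> c" using c M.P_ge[of r] by linarith
    ultimately have "c = int d" by auto
    thus False using c by simp
  qed
  ultimately show "nat c \<in> PS0 (psum mu r) (map (\<lambda>i. A i (int r + 1)) [int r + 1 - int (k (r + 1)) .. int r]) \<longleftrightarrow> QQ c"
    unfolding clR_def lo_def nm by simp
qed

end


context gctx begin

definition colj :: "nat \<Rightarrow> nat list" where
  "colj j = map (\<lambda>i. A i (int j)) [int j - int (k j) .. int j + int (k j)]"

lemma psum_mono_mu: "i \<le> j \<Longrightarrow> psum mu i \<le> psum mu j"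
  using M.P_mono[of i j] unfolding M.P_def by simp

lemma colj_sum: "1 \<le> j \<Longrightarrow> j \<le> r \<Longrightarrow> sum_list (colj j) = psum mu j - psum mu (j - 1)"
  unfolding colj_def using col_mid(1) by simp

lemma mid_PS:
  "m \<le> r \<Longrightarrow> sum_list (concat (map colj [1..<m + 1])) = psum mu m - psum mu 0 \<and>
    PS0 (psum mu 0) (concat (map colj [1..<m + 1])) = insert (psum mu 0) (\<Union>j \<in> {1..m}. PS0 (psum mu (j - 1)) (colj j))"
proof (induction m)
  case 0 thus ?case by simp
next
  case (Suc m)
  have IH: "sum_list (concat (map colj [1..<m + 1])) = psum mu m - psum mu 0"
    "PS0 (psum mu 0) (concat (map colj [1..<m + 1])) = insert (psum mu 0) (\<Union>j \<in> {1..m}. PS0 (psum mu (j - 1)) (colj j))"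
    using Suc by auto
  have up: "[1..<Suc m + 1] = [1..<m + 1] @ [m + 1]" by simp
  have mono: "psum mu 0 \<le> psum mu m" "psum mu m \<le> psum mu (m + 1)" using psum_mono_mu by auto
  have cs: "sum_list (colj (m + 1)) = psum mu (m + 1) - psum mu m" using colj_sum[of "m + 1"] Suc by simp
  have s: "sum_list (concat (map colj [1..<Suc m + 1])) = psum mu (Suc m) - psum mu 0"
    unfolding up using IH(1) cs mono by simp
  have off: "psum mu 0 + sum_list (concat (map colj [1..<m + 1])) = psum mu m" using IH(1) mono by simp
  have "PS0 (psum mu 0) (concat (map colj [1..<Suc m + 1]))
      = PS0 (psum mu 0) (concat (map colj [1..<m + 1])) \<union> PS0 (psum mu m) (colj (m + 1))"
    unfolding up using PS0_app off by simp
  also have "\<dots> = insert (psum mu 0) (\<Union>j \<in> {1..Suc m}. PS0 (psum mu (j - 1)) (colj j))"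
    unfolding IH(2) by (auto simp: atLeastAtMostSuc_conv)
  finally show ?case using s by simp
qed


definition a0 :: nat where "a0 = (A 0 0 - 1) div 2"
definition cl0 :: "nat list" where "cl0 = map (\<lambda>i. A (int i) 0) [1..<k 0 + 1]"
definition midl :: "nat list" where "midl = concat (map colj [1..<r + 1])"
definition clR :: "nat list" where "clR = map (\<lambda>i. A i (int r + 1)) [int r + 1 - int (k (r + 1)) .. int r]"
definition aR :: nat where "aR = (A (int r + 1) (int r + 1) - 1) div 2"

lemma delta_eq: "delta r A k = a0 # (cl0 @ midl @ clR) @ [aR]"
  unfolding delta_def a0_def cl0_def midl_def clR_def aR_def colj_def by simp

lemma PSS_delta: "PSS (delta r A k) = PS0 a0 cl0 \<union> PS0 (psum mu 0) midl \<union> PS0 (psum mu r) clR"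
proof -
  have s0: "a0 + sum_list cl0 = psum mu 0" unfolding a0_def cl0_def using col_0(1) .
  have sm: "sum_list midl = psum mu r - psum mu 0" unfolding midl_def using mid_PS[of r] by simp
  have mono: "psum mu 0 \<le> psum mu r" using psum_mono_mu by simp
  have "PSS (delta r A k) = PS0 a0 (cl0 @ midl @ clR)" unfolding delta_eq by (rule PSS_split)
  also have "\<dots> = PS0 a0 cl0 \<union> PS0 (psum mu 0) midl \<union> PS0 (psum mu r) clR"
    using PS0_app[of a0 cl0 "midl @ clR"] PS0_app[of "a0 + sum_list cl0" midl clR] s0 sm mono by auto
  finally show ?thesis .
qed

lemma PSS_mu: "PSS mu = {psum mu j | j. j \<le> r}" by (rule M.PSS_lam)

lemma P_int: "M.P j = int (psum mu j)" unfolding M.P_def ..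

lemma gap_c:
  assumes cd: "c \<le> d"
  shows "c \<in> PSS (delta r A k) \<longleftrightarrow> c \<in> PSS mu \<or> QQ (int c)"
proof -
  note PD = PSS_delta
  have s0: "a0 + sum_list cl0 = psum mu 0" unfolding a0_def cl0_def using col_0(1) .
  have sR: "psum mu r + sum_list clR + aR = d" unfolding clR_def aR_def using col_R(1) .
  have mPS: "PS0 (psum mu 0) midl = insert (psum mu 0) (\<Union>j \<in> {1..r}. PS0 (psum mu (j - 1)) (colj j))"
    unfolding midl_def using mid_PS[of r] by simp
  have r0: "x \<in> PS0 a0 cl0 \<Longrightarrow> a0 \<le> x \<and> x \<le> psum mu 0" for x using PS0_range[of x a0 cl0] s0 by simp
  have rR: "x \<in> PS0 (psum mu r) clR \<Longrightarrow> psum mu r \<le> x \<and> x + aR \<le> d" for x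
    using PS0_range[of x "psum mu r" clR] sR by simp
  have rj: "x \<in> PS0 (psum mu (j - 1)) (colj j) \<Longrightarrow> 1 \<le> j \<Longrightarrow> j \<le> r \<Longrightarrow> psum mu (j - 1) \<le> x \<and> x \<le> psum mu j" for x j
    using PS0_range[of x "psum mu (j - 1)" "colj j"] colj_sum[of j] psum_mono_mu[of "j - 1" j] by simp
  have rM: "x \<in> PS0 (psum mu 0) midl \<Longrightarrow> psum mu 0 \<le> x \<and> x \<le> psum mu r" for x
  proof -
    assume "x \<in> PS0 (psum mu 0) midl"
    hence "x = psum mu 0 \<or> (\<exists>j \<in> {1..r}. x \<in> PS0 (psum mu (j - 1)) (colj j))" unfolding mPS by auto
    thus ?thesis
    proof
      assume "x = psum mu 0" thus ?thesis using psum_mono_mu by simp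
    next
      assume "\<exists>j \<in> {1..r}. x \<in> PS0 (psum mu (j - 1)) (colj j)"
      then obtain j where "1 \<le> j" "j \<le> r" "x \<in> PS0 (psum mu (j - 1)) (colj j)" by auto
      thus ?thesis using rj psum_mono_mu[of 0 "j - 1"] psum_mono_mu[of j r] by fastforce
    qed
  qed
  have inPSSmu: "c \<in> PSS mu \<Longrightarrow> c \<in> PSS (delta r A k)"
  proof -
    assume "c \<in> PSS mu"
    then obtain j where j: "j \<le> r" "c = psum mu j" unfolding PSS_mu by auto
    show ?thesis
    proof (cases "j = 0")
      case True
      have "a0 + sum_list cl0 \<in> PS0 a0 cl0" by (rule PS0_last)
      thus ?thesis unfolding PD using True j s0 by simp
    next
      case False
      have "psum mu (j - 1) + sum_list (colj j) \<in> PS0 (psum mu (j - 1)) (colj j)" by (rule PS0_last)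
      moreover have "psum mu (j - 1) + sum_list (colj j) = psum mu j"
        using colj_sum[of j] psum_mono_mu[of "j - 1" j] False j by simp
      ultimately have "c \<in> PS0 (psum mu 0) midl" unfolding mPS using False j by auto
      thus ?thesis unfolding PD by simp
    qed
  qed
  show ?thesis
  proof (cases "c \<in> PSS mu")
    case True thus ?thesis using inPSSmu by simp
  next
    case False
    hence ne: "c \<noteq> psum mu j" if "j \<le> r" for j using that unfolding PSS_mu by auto
    have P0r: "psum mu 0 \<le> psum mu r" using psum_mono_mu by simp
    have Prd: "psum mu r \<le> d" using sR by simp
    consider "c < psum mu 0" | "psum mu r < c" | "psum mu 0 < c" "c < psum mu r"
      using ne[of 0] ne[of r] by linarith
    thus ?thesis
    proof cases
      case 1
      have n1: "c \<notin> PS0 (psum mu 0) midl" "c \<notin> PS0 (psum mu r) clR" using rM rR 1 P0r by fastforce+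
      show ?thesis
      proof (cases "c = 0")
        case True
        have mp: "0 < M.P 0" using 1 True P_int by simp
        have "c \<in> PS0 a0 cl0 \<longleftrightarrow> a0 = 0"
        proof
          assume "c \<in> PS0 a0 cl0" thus "a0 = 0" using r0 True by fastforce
        next
          assume "a0 = 0" thus "c \<in> PS0 a0 cl0" using PS0_first True by simp
        qed
        moreover have "a0 = 0 \<longleftrightarrow> QQ 0" unfolding a0_def using col_0(3)[OF mp] .
        ultimately show ?thesis unfolding PD using n1 False True by simp
      next
        case False
        have "c \<in> PS0 a0 cl0 \<longleftrightarrow> QQ (int c)"
          using col_0(2)[of "int c"] False 1 P_int unfolding a0_def cl0_def by simp
        thus ?thesis unfolding PD using n1 \<open>c \<notin> PSS mu\<close> by simp
      qed
    next
      case 2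
      have n1: "c \<notin> PS0 (psum mu 0) midl" "c \<notin> PS0 a0 cl0" using rM r0 2 P0r by fastforce+
      show ?thesis
      proof (cases "c = d")
        case True
        have mp: "M.P r < int d" using 2 True P_int by simp
        have "c \<in> PS0 (psum mu r) clR \<longleftrightarrow> aR = 0"
        proof
          assume "c \<in> PS0 (psum mu r) clR" thus "aR = 0" using rR True by fastforce
        next
          assume "aR = 0" thus "c \<in> PS0 (psum mu r) clR" using PS0_last[of "psum mu r" clR] sR True by simp
        qed
        moreover have "aR = 0 \<longleftrightarrow> QQ (int d)" unfolding aR_def using col_R(3)[OF mp] .
        ultimately show ?thesis unfolding PD using n1 False True by simp
      next
        case False
        have "c \<in> PS0 (psum mu r) clR \<longleftrightarrow> QQ (int c)"
          using col_R(2)[of "int c"] False 2 cd P_int unfolding clR_def by simp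
        thus ?thesis unfolding PD using n1 \<open>c \<notin> PSS mu\<close> by simp
      qed
    next
      case 3
      define j where "j = (LEAST j. c < psum mu j)"
      have ex: "c < psum mu j" unfolding j_def using LeastI[of "\<lambda>j. c < psum mu j" r] 3 by simp
      have jr: "j \<le> r" unfolding j_def using Least_le[of "\<lambda>j. c < psum mu j" r] 3 by simp
      have j1: "1 \<le> j" using ex 3 by (cases j) auto
      have "\<not> c < psum mu (j - 1)" unfolding j_def using not_less_Least[of "j - 1" "\<lambda>j. c < psum mu j"] j1 j_def by simp
      moreover have "c \<noteq> psum mu (j - 1)" using ne[of "j - 1"] jr by simp
      ultimately have jl: "psum mu (j - 1) < c" by simp
      have n1: "c \<notin> PS0 a0 cl0" "c \<notin> PS0 (psum mu r) clR" using r0 rR 3 by fastforce+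
      have "c \<in> PS0 (psum mu 0) midl \<longleftrightarrow> c \<in> PS0 (psum mu (j - 1)) (colj j)"
      proof
        assume "c \<in> PS0 (psum mu 0) midl"
        hence "c = psum mu 0 \<or> (\<exists>j' \<in> {1..r}. c \<in> PS0 (psum mu (j' - 1)) (colj j'))" unfolding mPS by auto
        moreover have "c \<noteq> psum mu 0" using 3 by simp
        ultimately obtain j' where j': "1 \<le> j'" "j' \<le> r" "c \<in> PS0 (psum mu (j' - 1)) (colj j')" by auto
        have "j' = j"
        proof (rule ccontr)
          assume "j' \<noteq> j"
          hence "j' < j \<or> j < j'" by linarith
          thus False
          proof
            assume "j' < j"
            hence "psum mu j' \<le> psum mu (j - 1)" using psum_mono_mu by simp
            thus False using rj[OF j'(3) j'(1,2)] jl by simp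
          next
            assume "j < j'"
            hence "psum mu j \<le> psum mu (j' - 1)" using psum_mono_mu by simp
            thus False using rj[OF j'(3) j'(1,2)] ex by simp
          qed
        qed
        thus "c \<in> PS0 (psum mu (j - 1)) (colj j)" using j' by simp
      next
        assume "c \<in> PS0 (psum mu (j - 1)) (colj j)"
        thus "c \<in> PS0 (psum mu 0) midl" unfolding mPS using j1 jr by auto
      qed
      moreover have "c \<in> PS0 (psum mu (j - 1)) (colj j) \<longleftrightarrow> QQ (int c)"
        using col_mid(2)[OF j1 jr, of "int c"] jl ex P_int unfolding colj_def by simp
      ultimately show ?thesis unfolding PD using n1 \<open>c \<notin> PSS mu\<close> by simp
    qed
  qed
qed


lemma gD1: "g (x + DD) = g x + DD" by (rule W_D[OF gW])

lemma QQ_D: "QQ (x + DD) = QQ x"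
proof -
  have a: "g (x + DD) = g x + DD" by (rule gD1)
  have "g (x + DD + 1) = g ((x + 1) + DD)" by (rule arg_cong[where f=g]) simp
  hence b: "g (x + DD + 1) = g (x + 1) + DD" using gD1 by simp
  have sh: "L.EE (i + (-1) * L.nn) = L.EE i + (-1) * DD" for i by (rule L.EE_shiftk)
  have sh2: "L.EE (i + 1 * L.nn) = L.EE i + 1 * DD" for i by (rule L.EE_shiftk)
  show ?thesis unfolding QQ_def a b
  proof
    assume "\<exists>i. g x + DD \<le> L.EE i \<and> L.EE i < g (x + 1) + DD"
    then obtain i where "g x + DD \<le> L.EE i" "L.EE i < g (x + 1) + DD" by blast
    thus "\<exists>i. g x \<le> L.EE i \<and> L.EE i < g (x + 1)" using sh[of i] by (intro exI[of _ "i + (-1) * L.nn"]) simp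
  next
    assume "\<exists>i. g x \<le> L.EE i \<and> L.EE i < g (x + 1)"
    then obtain i where "g x \<le> L.EE i" "L.EE i < g (x + 1)" by blast
    thus "\<exists>i. g x + DD \<le> L.EE i \<and> L.EE i < g (x + 1) + DD" using sh2[of i] by (intro exI[of _ "i + 1 * L.nn"]) simp
  qed
qed

lemma QQ_neg: "QQ (- x - 1) = QQ x"
proof -
  have a: "g (- x - 1) = - g (x + 1)"
  proof -
    have "g (- x - 1) = g (- (x + 1))" by (rule arg_cong[where f=g]) simp
    also have "\<dots> = - g (x + 1)" by (rule gneg)
    finally show ?thesis .
  qed
  have b: "g (- x - 1 + 1) = - g x" using gneg by simp
  show ?thesis unfolding QQ_def a b
  proof
    assume "\<exists>i. - g (x + 1) \<le> L.EE i \<and> L.EE i < - g x"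
    then obtain i where "- g (x + 1) \<le> L.EE i" "L.EE i < - g x" by blast
    thus "\<exists>i. g x \<le> L.EE i \<and> L.EE i < g (x + 1)" using L.EE_neg[of i] by (intro exI[of _ "- i - 1"]) simp
  next
    assume "\<exists>i. g x \<le> L.EE i \<and> L.EE i < g (x + 1)"
    then obtain i where "g x \<le> L.EE i" "L.EE i < g (x + 1)" by blast
    thus "\<exists>i. - g (x + 1) \<le> L.EE i \<and> L.EE i < - g x" using L.EE_neg[of i] by (intro exI[of _ "- i - 1"]) simp
  qed
qed

lemma cut_delta: "cutX (PSS (delta r A k)) x \<longleftrightarrow> cutX (PSS mu) x \<or> QQ x"
proof -
  define c where "c = nat (ci x)"
  have c: "int c = ci x" "c \<le> d" unfolding c_def using ci_range[of x] by auto
  have "QQ x = QQ (ci x)" using red[where P=QQ] QQ_D QQ_neg by blast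
  thus ?thesis unfolding cutX_def c_def[symmetric] using gap_c[OF c(2)] c(1) by simp
qed

lemma sameb_le: "u \<le> v \<Longrightarrow> sameb X u v \<longleftrightarrow> (\<forall>x. u \<le> x \<and> x < v \<longrightarrow> \<not> cutX X x)"
  unfolding sameb_def by simp

lemma sameb_delta_le:
  assumes uv: "u \<le> v"
  shows "sameb (PSS (delta r A k)) u v \<longleftrightarrow> sameb (PSS mu) u v \<and> sameb (PSS lam) (g u) (g v)"
proof
  assume H: "sameb (PSS (delta r A k)) u v"
  hence H': "\<And>x. u \<le> x \<Longrightarrow> x < v \<Longrightarrow> \<not> cutX (PSS mu) x \<and> \<not> QQ x" using sameb_le[OF uv] cut_delta by blast
  have inc: "\<And>x. u \<le> x \<Longrightarrow> x < v \<Longrightarrow> g x < g (x + 1)" using H' g_gap by blast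
  have guv: "g u \<le> g v" using mono_on_int_le[of u v g u v, OF inc] uv by simp
  have "sameb (PSS mu) u v" using sameb_le[OF uv] H' by blast
  moreover have "sameb (PSS lam) (g u) (g v)"
    unfolding sameb_le[OF guv]
  proof (intro allI impI notI)
    fix z assume z: "g u \<le> z \<and> z < g v" and cz: "cutX (PSS lam) z"
    obtain i where i: "z = L.EE i" using cz L.cut_EE by blast
    have "u < v" using z uv by (cases "u = v") auto
    then obtain x' where x': "u < x'" "x' \<le> v" "g (x' - 1) \<le> z" "z < g x'" using ivt_int[of g u z v] z by blast
    have "QQ (x' - 1)" unfolding QQ_def using x' i by (intro exI[of _ i]) simp
    thus False using H'[of "x' - 1"] x' by simp
  qed
  ultimately show "sameb (PSS mu) u v \<and> sameb (PSS lam) (g u) (g v)" by simp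
next
  assume H: "sameb (PSS mu) u v \<and> sameb (PSS lam) (g u) (g v)"
  have nm: "\<And>x. u \<le> x \<Longrightarrow> x < v \<Longrightarrow> \<not> cutX (PSS mu) x" using H sameb_le[OF uv] by blast
  have inc: "\<And>x. u \<le> x \<Longrightarrow> x < v \<Longrightarrow> g x < g (x + 1)" using nm g_gap by blast
  have gm: "\<And>y y'. u \<le> y \<Longrightarrow> y \<le> y' \<Longrightarrow> y' \<le> v \<Longrightarrow> g y \<le> g y'"
    using mono_on_int_le[of u v g, OF inc] by blast
  have guv: "g u \<le> g v" using gm uv by simp
  have nl: "\<And>z. g u \<le> z \<Longrightarrow> z < g v \<Longrightarrow> \<not> cutX (PSS lam) z" using H sameb_le[OF guv] by blast
  show "sameb (PSS (delta r A k)) u v"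
    unfolding sameb_le[OF uv]
  proof (intro allI impI)
    fix x assume x: "u \<le> x \<and> x < v"
    have "\<not> QQ x"
    proof
      assume "QQ x"
      then obtain i where i: "g x \<le> L.EE i" "L.EE i < g (x + 1)" unfolding QQ_def by blast
      have "g u \<le> g x" "g (x + 1) \<le> g v" using gm x by auto
      hence "\<not> cutX (PSS lam) (L.EE i)" using nl i by simp
      thus False using L.cut_EE by blast
    qed
    thus "\<not> cutX (PSS (delta r A k)) x" using cut_delta nm x by blast
  qed
qed

lemma sameb_delta:
  "sameb (PSS (delta r A k)) u v \<longleftrightarrow> sameb (PSS mu) u v \<and> sameb (PSS lam) (g u) (g v)"
proof (cases "u \<le> v")
  case True thus ?thesis by (rule sameb_delta_le)
next
  case False
  hence "v \<le> u" by simp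
  from sameb_delta_le[OF this] show ?thesis using sameb_sym by blast
qed

lemma main_eq: "Wpar d (delta r A k) = {inv g \<circ> w \<circ> g | w. w \<in> Wpar d lam} \<inter> Wpar d mu"
proof -
  have b: "bij g" using W_bij[OF gW] .
  have gi: "g (inv g z) = z" for z using b by (simp add: bij_is_surj surj_f_inv_f)
  have ig: "inv g (g z) = z" for z using b by (simp add: bij_is_inj inv_f_f)
  show ?thesis
    unfolding Wpar_Stab
  proof (rule set_eqI, rule iffI)
    fix x assume x: "x \<in> Stab (PSS (delta r A k))"
    hence xW: "x \<in> Wg" and sx: "\<And>y. sameb (PSS (delta r A k)) (x y) y" unfolding Stab_def by auto
    define w where "w = g \<circ> x \<circ> inv g"
    have wW: "w \<in> Wg" unfolding w_def using W_comp W_inv gW xW by metis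
    have "sameb (PSS lam) (w z) z" for z
    proof -
      have "sameb (PSS lam) (g (x (inv g z))) (g (inv g z))" using sx[of "inv g z"] sameb_delta by blast
      thus ?thesis unfolding w_def using gi by simp
    qed
    hence "w \<in> Stab (PSS lam)" using wW unfolding Stab_def by auto
    moreover have "inv g \<circ> w \<circ> g = x" unfolding w_def using ig by (simp add: fun_eq_iff)
    moreover have "x \<in> Stab (PSS mu)" using xW sx sameb_delta unfolding Stab_def by blast
    ultimately show "x \<in> {inv g \<circ> w \<circ> g | w. w \<in> Stab (PSS lam)} \<inter> Stab (PSS mu)" by blast
  next
    fix x assume "x \<in> {inv g \<circ> w \<circ> g | w. w \<in> Stab (PSS lam)} \<inter> Stab (PSS mu)"
    then obtain w where w: "w \<in> Stab (PSS lam)" "x = inv g \<circ> w \<circ> g" and xm: "x \<in> Stab (PSS mu)" by blast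
    have xW: "x \<in> Wg" using xm unfolding Stab_def by simp
    have "sameb (PSS (delta r A k)) (x y) y" for y
    proof -
      have "sameb (PSS mu) (x y) y" using xm unfolding Stab_def by simp
      moreover have "g (x y) = w (g y)" using w(2) gi by simp
      hence "sameb (PSS lam) (g (x y)) (g y)" using w(1) unfolding Stab_def by simp
      ultimately show ?thesis using sameb_delta by blast
    qed
    thus "x \<in> Stab (PSS (delta r A k))" using xW unfolding Stab_def by simp
  qed
qed

end

theorem proposition2p5p3:
  fixes r d :: nat and lam mu :: "nat list" and g :: "int \<Rightarrow> int" and k :: "nat \<Rightarrow> nat"
  assumes "d \<ge> 2"
    and "lam \<in> Lam r d" and "mu \<in> Lam r d"
    and "g \<in> Dlm d lam mu"
    and "kvalid r (kappa d lam g mu) k"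
  shows "Wpar d (delta r (kappa d lam g mu) k)
           = {inv g \<circ> w \<circ> g | w. w \<in> Wpar d lam} \<inter> Wpar d mu"
proof -
  interpret gctx d r lam mu g k
    by unfold_locales (use assms in auto)
  show ?thesis by (rule main_eq)
qed


end
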